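(* Let $x_0\in\mathbb{R}$ and $\varpi\in\mathbb{H}_{\mathbb{F}}$. Suppose Assumptions (A1)–(A4) hold. Then the functional $$I[v]=\mathbb{E}\left[\int_0^T \big(L(X_t,v_t)+\varpi_t v_t\big)\,dt+\Psi(X_T)\right],\qquad X_t=x_0+\int_0^t v_s\,ds,$$ is weakly lower semi-continuous on $\mathbb{H}_{\mathbb{F}}$.
   Context: Fix $T>0$ and a complete filtered probability space $(\Omega,\mathcal{F},\mathbb{F},\mathbb{P})$, where $\mathbb{F}$ is the standard filtration generated by a one-dimensional Brownian motion $W$. $\mathbb{H}_{\mathbb{F}}$ denotes the Hilbert space of measurable, $\mathbb{F}$-adapted processes $v:[0,T]\times\Omega\to\mathbb{R}$ with $\mathbb{E}[\int_0^T v_t^2dt]<\infty$, inner product $\langle v,w\rangle=\mathbb{E}[\int_0^Tv_tw_tdt]$. (A1) $L\in C^1(\mathbb{R}^2;[0,\infty))$ and $(x,v)\mapsto L(x,v)$ is convex. (A2) $\Psi\in C^1(\mathbb{R};[0,\infty))$ is convex. (A3) There are $C,\tilde C>0$ with $\Psi(x)\le C(1+|x|^2)$ and $|\Psi'(x)|\le \tilde C(1+|x|)$ for all $x$. (A4) There are $\tilde\beta,C>0$ with $L(x,v)\le\tilde\beta(1+|v|^2)$ and $|L_x(x,v)|,|L_v(x,v)|\le C(1+|v|)$ for all $(x,v)$. *)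

theory Defs
  imports "HOL-Probability.Probability"
begin

definition brownian_motion :: "'a measure \<Rightarrow> (real \<Rightarrow> 'a \<Rightarrow> real) \<Rightarrow> bool" where
  "brownian_motion M W \<longleftrightarrow>
     prob_space M \<and>
     (\<forall>t\<ge>0. W t \<in> borel_measurable M) \<and>
     (AE \<omega> in M. W 0 \<omega> = 0) \<and>
     (AE \<omega> in M. continuous_on {0..} (\<lambda>t. W t \<omega>)) \<and>
     (\<forall>s t. 0 \<le> s \<and> s < t \<longrightarrow>
        distributed M lborel (\<lambda>\<omega>. W t \<omega> - W s \<omega>) (normal_density 0 (sqrt (t - s)))) \<and>
     (\<forall>ts. sorted_wrt (<) ts \<and> (\<forall>t\<in>set ts. 0 \<le> t) \<longrightarrow>
        prob_space.indep_vars M (\<lambda>_. borel)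
          (\<lambda>i \<omega>. W (ts ! Suc i) \<omega> - W (ts ! i) \<omega>) {..<length ts - 1})"

definition complete_space_measure :: "'a measure \<Rightarrow> bool" where
  "complete_space_measure M \<longleftrightarrow> (\<forall>A\<in>null_sets M. \<forall>B\<subseteq>A. B \<in> sets M)"

definition brownian_filtration :: "'a measure \<Rightarrow> (real \<Rightarrow> 'a \<Rightarrow> real) \<Rightarrow> real \<Rightarrow> 'a set set" where
  "brownian_filtration M W t =
     sigma_sets (space M)
       ((\<Union>s\<in>{0..t}. {W s -` B \<inter> space M | B. B \<in> sets borel}) \<union> null_sets M)"

definition time_prod :: "'a measure \<Rightarrow> real \<Rightarrow> (real \<times> 'a) measure" where
  "time_prod M T = restrict_space lborel {0..T} \<Otimes>\<^sub>M M"

text \<open>The space H_F (representatives of its elements).\<close>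
definition H_F :: "'a measure \<Rightarrow> (real \<Rightarrow> 'a set set) \<Rightarrow> real \<Rightarrow> (real \<Rightarrow> 'a \<Rightarrow> real) set" where
  "H_F M F T = {v.
     (\<lambda>(t, \<omega>). v t \<omega>) \<in> borel_measurable (time_prod M T) \<and>
     (\<forall>t\<in>{0..T}. v t \<in> borel_measurable (sigma (space M) (F t))) \<and>
     integrable (time_prod M T) (\<lambda>(t, \<omega>). (v t \<omega>)\<^sup>2)}"

definition H_inner :: "'a measure \<Rightarrow> real \<Rightarrow> (real \<Rightarrow> 'a \<Rightarrow> real) \<Rightarrow> (real \<Rightarrow> 'a \<Rightarrow> real) \<Rightarrow> real" where
  "H_inner M T v w = integral\<^sup>L (time_prod M T) (\<lambda>(t, \<omega>). v t \<omega> * w t \<omega>)"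

definition state :: "real \<Rightarrow> (real \<Rightarrow> 'a \<Rightarrow> real) \<Rightarrow> real \<Rightarrow> 'a \<Rightarrow> real" where
  "state x0 v t \<omega> = x0 + (LINT s:{0..t}|lborel. v s \<omega>)"

definition cost_I :: "'a measure \<Rightarrow> real \<Rightarrow> real \<Rightarrow> (real \<Rightarrow> 'a \<Rightarrow> real) \<Rightarrow>
    (real \<Rightarrow> real \<Rightarrow> real) \<Rightarrow> (real \<Rightarrow> real) \<Rightarrow> (real \<Rightarrow> 'a \<Rightarrow> real) \<Rightarrow> real" where
  "cost_I M T x0 varpi L \<Psi> v =
     (\<integral>\<omega>. (LINT t:{0..T}|lborel. L (state x0 v t \<omega>) (v t \<omega>) + varpi t \<omega> * v t \<omega>)
           + \<Psi> (state x0 v T \<omega>) \<partial>M)"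

definition weakly_lsc_on :: "'b set \<Rightarrow> ('b \<Rightarrow> 'b \<Rightarrow> real) \<Rightarrow> ('b \<Rightarrow> real) \<Rightarrow> bool" where
  "weakly_lsc_on H ip J \<longleftrightarrow>
     (\<forall>vs v. (\<forall>n. vs n \<in> H) \<and> v \<in> H \<and>
        (\<forall>w\<in>H. (\<lambda>n. ip (vs n) w) \<longlonglongrightarrow> ip v w) \<longrightarrow>
        ereal (J v) \<le> liminf (\<lambda>n. ereal (J (vs n))))"

end

theory Submission
  imports Defs
begin
lemma sq_integrable_mult:
  fixes f g :: "'b \<Rightarrow> real"
  assumes "f \<in> borel_measurable N" "g \<in> borel_measurable N"
    "integrable N (\<lambda>x. (f x)\<^sup>2)" "integrable N (\<lambda>x. (g x)\<^sup>2)"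
  shows "integrable N (\<lambda>x. f x * g x)"
proof (rule Bochner_Integration.integrable_bound)
  show "integrable N (\<lambda>x. ((f x)\<^sup>2 + (g x)\<^sup>2) / 2)" using assms by auto
  show "AE x in N. norm (f x * g x) \<le> norm (((f x)\<^sup>2 + (g x)\<^sup>2) / 2)"
  proof (rule AE_I2)
    fix x
    have "0 \<le> (\<bar>f x\<bar> - \<bar>g x\<bar>)\<^sup>2" by simp
    then show "norm (f x * g x) \<le> norm (((f x)\<^sup>2 + (g x)\<^sup>2) / 2)"
      by (simp add: power2_eq_square abs_mult algebra_simps)
  qed
qed (use assms in auto)

lemma amgm_int:
  fixes f g :: "'b \<Rightarrow> real"
  assumes "integrable N (\<lambda>x. (f x)\<^sup>2)" "integrable N (\<lambda>x. (g x)\<^sup>2)" "integrable N (\<lambda>x. f x * g x)"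
    "e > 0"
  shows "\<bar>\<integral>x. f x * g x \<partial>N\<bar> \<le> (e * (\<integral>x. (f x)\<^sup>2 \<partial>N) + (\<integral>x. (g x)\<^sup>2 \<partial>N) / e) / 2"
proof -
  have p: "\<bar>f x * g x\<bar> \<le> (e * (f x)\<^sup>2 + (g x)\<^sup>2 / e) / 2" for x
  proof -
    define a where "a = sqrt e * \<bar>f x\<bar>"
    define b where "b = \<bar>g x\<bar> / sqrt e"
    have se: "sqrt e * sqrt e = e" using assms(4) by simp
    have ab: "a * b = \<bar>f x * g x\<bar>" unfolding a_def b_def using assms(4) by (simp add: abs_mult)
    have a2: "a\<^sup>2 = e * (f x)\<^sup>2" unfolding a_def power2_eq_square
      by (metis abs_mult_self_eq mult.assoc mult.left_commute se)
    have b2: "b\<^sup>2 = (g x)\<^sup>2 / e" unfolding b_def power2_eq_square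
      by (metis abs_mult_self_eq times_divide_times_eq se)
    have "0 \<le> (a - b)\<^sup>2" by simp
    also have "\<dots> = a\<^sup>2 - 2 * (a * b) + b\<^sup>2" by (simp add: power2_diff)
    also have "\<dots> = e * (f x)\<^sup>2 - 2 * \<bar>f x * g x\<bar> + (g x)\<^sup>2 / e" using ab a2 b2 by simp
    finally show ?thesis by simp
  qed
  have "\<bar>\<integral>x. f x * g x \<partial>N\<bar> \<le> (\<integral>x. \<bar>f x * g x\<bar> \<partial>N)"
    by (rule integral_abs_bound)
  also have "\<dots> \<le> (\<integral>x. (e * (f x)\<^sup>2 + (g x)\<^sup>2 / e) / 2 \<partial>N)"
    by (rule integral_mono) (use assms p in auto)
  also have "\<dots> = (e * (\<integral>x. (f x)\<^sup>2 \<partial>N) + (\<integral>x. (g x)\<^sup>2 \<partial>N) / e) / 2"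
    using assms by simp
  finally show ?thesis .
qed

locale ctrl = prob_space M for M :: "'a measure" +
  fixes F :: "real \<Rightarrow> 'a set set" and T :: real
  assumes T_pos: "0 < T"
  and F_sub: "\<And>t. F t \<subseteq> sets M"
  and F_mono: "\<And>s t. s \<le> t \<Longrightarrow> F s \<subseteq> F t"
  and F_null: "\<And>t. null_sets M \<subseteq> F t"
  and F_sa: "\<And>t. sigma_algebra (space M) (F t)"
  and compl: "\<And>A B. A \<in> null_sets M \<Longrightarrow> B \<subseteq> A \<Longrightarrow> B \<in> sets M"
begin

abbreviation G where "G t \<equiv> sigma (space M) (F t)"

lemma sets_G: "sets (G t) = F t"
  by (simp add: F_sa sigma_algebra.sets_measure_of_eq)

lemma space_G[simp]: "space (G t) = space M" by (simp add: space_measure_of_conv)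

lemma subalg: "subalgebra M (G t)"
  unfolding subalgebra_def using sets_G F_sub by simp

lemma sfs: "sigma_finite_subalgebra M (G t)"
proof -
  interpret finite_measure_subalgebra M "G t"
    by unfold_locales (rule subalg)
  show ?thesis by unfold_locales
qed

lemma G_mono: "s \<le> t \<Longrightarrow> f \<in> borel_measurable (G s) \<Longrightarrow> f \<in> borel_measurable (G t)"
  unfolding measurable_def using F_mono sets_G by auto

lemma G_M: "f \<in> borel_measurable (G s) \<Longrightarrow> f \<in> borel_measurable M"
  using measurable_from_subalg subalg by blast

definition R where "R = restrict_space lborel {0..T::real}"

lemma space_R: "space R = {0..T}" unfolding R_def by simp

lemma sets_R: "sets R = sets (restrict_space borel {0..T})" unfolding R_def by (rule sets_restrict_space_cong) simp

lemma emeasure_R: "emeasure R (space R) = ennreal T"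
  unfolding R_def using T_pos by (simp add: emeasure_restrict_space)

lemma measure_R: "measure R (space R) = T"
  unfolding measure_def emeasure_R using T_pos by simp

lemma finite_R: "finite_measure R"
  by (rule finite_measureI) (simp add: emeasure_R)

sublocale R: finite_measure R by (rule finite_R)

sublocale PRM: pair_sigma_finite R M by unfold_locales

abbreviation N where "N \<equiv> R \<Otimes>\<^sub>M M"

lemma time_prod_eq: "time_prod M T = N"
  unfolding time_prod_def R_def ..

lemma finite_N: "finite_measure N"
  by (rule finite_measure_pair_measure) (auto intro: finite_R prob_space_axioms)

sublocale NN: finite_measure N by (rule finite_N)

end

lemma fm_L1_of_L2:
  fixes f :: "'b \<Rightarrow> real"
  assumes "finite_measure Q" "f \<in> borel_measurable Q" "integrable Q (\<lambda>x. (f x)\<^sup>2)"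
  shows "integrable Q f"
proof (rule Bochner_Integration.integrable_bound)
  interpret finite_measure Q by fact
  show "integrable Q (\<lambda>x. (1 + (f x)\<^sup>2) / 2)" using assms by auto
  show "AE x in Q. norm (f x) \<le> norm ((1 + (f x)\<^sup>2) / 2)"
  proof (rule AE_I2)
    fix x
    have "0 \<le> (\<bar>f x\<bar> - 1)\<^sup>2" by simp
    then show "norm (f x) \<le> norm ((1 + (f x)\<^sup>2) / 2)"
      by (simp add: power2_eq_square algebra_simps)
  qed
qed (use assms in auto)

lemma fm_CS:
  fixes f :: "'b \<Rightarrow> real"
  assumes "finite_measure Q" "f \<in> borel_measurable Q" "integrable Q (\<lambda>x. (f x)\<^sup>2)"
  shows "(\<integral>x. f x \<partial>Q)\<^sup>2 \<le> measure Q (space Q) * (\<integral>x. (f x)\<^sup>2 \<partial>Q)"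
proof -
  interpret finite_measure Q by fact
  have i1: "integrable Q f" by (rule fm_L1_of_L2[OF assms])
  define m where "m = measure Q (space Q)"
  define I where "I = (\<integral>x. f x \<partial>Q)"
  show ?thesis
  proof (cases "m = 0")
    case True
    then have "emeasure Q (space Q) = 0" unfolding m_def by (simp add: emeasure_eq_measure)
    then have "AE x in Q. f x = 0" by (intro AE_I[of _ _ "space Q"]) auto
    then have "I = 0" unfolding I_def by (simp add: integral_eq_zero_AE)
    then show ?thesis using True unfolding m_def I_def by simp
  next
    case False
    then have mpos: "m > 0" unfolding m_def using measure_nonneg[of Q "space Q"] by linarith
    define c where "c = I / m"
    have "0 \<le> (\<integral>x. (f x - c)\<^sup>2 \<partial>Q)" by simp
    also have "(\<integral>x. (f x - c)\<^sup>2 \<partial>Q) = (\<integral>x. (f x)\<^sup>2 - 2 * c * f x + c\<^sup>2 \<partial>Q)"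
      by (simp add: power2_diff algebra_simps)
    also have "\<dots> = (\<integral>x. (f x)\<^sup>2 \<partial>Q) - 2 * c * I + c\<^sup>2 * m"
      using assms(3) i1 unfolding I_def m_def by (simp add: measure_nonneg)
    also have "\<dots> = (\<integral>x. (f x)\<^sup>2 \<partial>Q) - I\<^sup>2 / m"
      using mpos unfolding c_def by (simp add: power2_eq_square field_simps)
    finally have "I\<^sup>2 / m \<le> (\<integral>x. (f x)\<^sup>2 \<partial>Q)" by simp
    then show ?thesis using mpos unfolding I_def[symmetric] m_def[symmetric]
      by (simp add: field_simps)
  qed
qed

context ctrl begin

lemma H_iff: "v \<in> H_F M F T \<longleftrightarrow> (\<lambda>(t,\<omega>). v t \<omega>) \<in> borel_measurable N \<and>
   (\<forall>t\<in>{0..T}. v t \<in> borel_measurable (G t)) \<and> integrable N (\<lambda>(t,\<omega>). (v t \<omega>)\<^sup>2)"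
  unfolding H_F_def time_prod_eq by simp

lemma id_R_meas[measurable]: "(\<lambda>t. t) \<in> borel_measurable R"
  unfolding R_def by (rule measurable_restrict_space1) simp

lemma lint_R:
  fixes f :: "real \<Rightarrow> real"
  assumes "t \<le> T"
  shows "(LINT s:{0..t}|lborel. f s) = (\<integral>s. indicator {0..t} s * f s \<partial>R)"
proof -
  have "(\<integral>s. indicator {0..t} s * f s \<partial>R) =
        (\<integral>s. indicator {0..T} s *\<^sub>R (indicator {0..t} s * f s) \<partial>lborel)"
    unfolding R_def by (subst integral_restrict_space) auto
  also have "\<dots> = (\<integral>s. indicator {0..t} s *\<^sub>R f s \<partial>lborel)"
    by (rule Bochner_Integration.integral_cong) (use assms in \<open>auto simp: indicator_def\<close>)
  finally show ?thesis unfolding set_lebesgue_integral_def by simp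
qed

lemma state_meas:
  assumes v: "(\<lambda>(t,\<omega>). v t \<omega>) \<in> borel_measurable N"
  shows "(\<lambda>(t,\<omega>). state x0 v t \<omega>) \<in> borel_measurable N"
proof -
  have m1: "(\<lambda>(p, s). indicator {0..fst p} s * v s (snd p)) \<in> borel_measurable (N \<Otimes>\<^sub>M R)"
  proof -
    have a: "(\<lambda>q. (snd q, snd (fst q))) \<in> measurable (N \<Otimes>\<^sub>M R) N" by measurable
    have b: "(\<lambda>q. v (snd q) (snd (fst q))) \<in> borel_measurable (N \<Otimes>\<^sub>M R)"
      using measurable_comp[OF a v] by (simp add: o_def)
    have c: "(\<lambda>q. indicator {0..fst (fst q)} (snd q) :: real) \<in> borel_measurable (N \<Otimes>\<^sub>M R)"
    proof -
      have "(\<lambda>q. indicator {0..fst (fst q)} (snd q) :: real) =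
            (\<lambda>q. if 0 \<le> snd q \<and> snd q \<le> fst (fst q) then 1 else 0)"
        by (auto simp: indicator_def)
      also have "\<dots> \<in> borel_measurable (N \<Otimes>\<^sub>M R)" by measurable
      finally show ?thesis .
    qed
    show ?thesis using borel_measurable_times[OF c b] by (simp add: case_prod_beta)
  qed
  have "(\<lambda>p. \<integral>s. indicator {0..fst p} s * v s (snd p) \<partial>R) \<in> borel_measurable N"
    using R.borel_measurable_lebesgue_integral[OF m1] by simp
  then have "(\<lambda>p. x0 + (\<integral>s. indicator {0..fst p} s * v s (snd p) \<partial>R)) \<in> borel_measurable N"
    by simp
  then show ?thesis
  proof (rule measurable_cong[THEN iffD1, rotated])
    fix p assume "p \<in> space N"
    then have "fst p \<le> T" by (auto simp: space_pair_measure space_R)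
    then show "x0 + (\<integral>s. indicator {0..fst p} s * v s (snd p) \<partial>R) = (\<lambda>(t,\<omega>). state x0 v t \<omega>) p"
      by (cases p) (simp add: state_def lint_R)
  qed
qed

end

context ctrl begin

lemma AE_snd:
  assumes "AE \<omega> in M. P \<omega>"
  shows "AE p in N. P (snd p)"
proof -
  obtain N0 where N0: "{\<omega>\<in>space M. \<not> P \<omega>} \<subseteq> N0" "emeasure M N0 = 0" "N0 \<in> sets M"
    using assms unfolding eventually_ae_filter by auto
  show ?thesis
  proof (rule AE_I[of _ _ "space R \<times> N0"])
    show "{p \<in> space N. \<not> P (snd p)} \<subseteq> space R \<times> N0"
      using N0(1) by (auto simp: space_pair_measure)
    show "emeasure N (space R \<times> N0) = 0"
      using N0 by (subst emeasure_pair_measure_Times) auto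
    show "space R \<times> N0 \<in> sets N" using N0(3) by simp
  qed
qed

lemma cp_meas: "(\<lambda>(t,\<omega>). v t \<omega>) \<in> borel_measurable N \<Longrightarrow> (\<lambda>p. v (fst p) (snd p)) \<in> borel_measurable N"
  by (simp add: split_beta')

lemma sec_meas:
  fixes v :: "real \<Rightarrow> 'a \<Rightarrow> real"
  assumes "(\<lambda>(t,\<omega>). v t \<omega>) \<in> borel_measurable N" "\<omega> \<in> space M"
  shows "(\<lambda>s. v s \<omega>) \<in> borel_measurable R"
  using measurable_comp[OF measurable_Pair2'[OF assms(2)] assms(1)] by (simp add: o_def)

lemma sec_meas2:
  fixes v :: "real \<Rightarrow> 'a \<Rightarrow> real"
  assumes "(\<lambda>(t,\<omega>). v t \<omega>) \<in> borel_measurable N" "t \<in> space R"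
  shows "v t \<in> borel_measurable M"
  using measurable_comp[OF measurable_Pair1'[OF assms(2)] assms(1)] by (simp add: o_def)

lemma swap_meas:
  fixes v :: "real \<Rightarrow> 'a \<Rightarrow> real"
  assumes "(\<lambda>(t,\<omega>). v t \<omega>) \<in> borel_measurable N"
  shows "(\<lambda>(\<omega>, s). v s \<omega>) \<in> borel_measurable (M \<Otimes>\<^sub>M R)"
proof -
  have a: "(\<lambda>q. (snd q, fst q)) \<in> measurable (M \<Otimes>\<^sub>M R) N" by measurable
  show ?thesis using measurable_comp[OF a assms] by (simp add: o_def split_beta')
qed

lemma ind_R_meas: "(indicator {a..b} :: real \<Rightarrow> real) \<in> borel_measurable R"
  unfolding R_def by (rule measurable_restrict_space1) simp

definition Q2 :: "(real \<Rightarrow> 'a \<Rightarrow> real) \<Rightarrow> 'a \<Rightarrow> real" where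
  "Q2 v \<omega> = (\<integral>s. (v s \<omega>)\<^sup>2 \<partial>R)"

lemma Q2_meas:
  assumes "(\<lambda>(t,\<omega>). v t \<omega>) \<in> borel_measurable N"
  shows "Q2 v \<in> borel_measurable M"
proof -
  have "(\<lambda>(\<omega>, s). (v s \<omega>)\<^sup>2) \<in> borel_measurable (M \<Otimes>\<^sub>M R)"
    using borel_measurable_power[OF swap_meas[OF assms], of 2] by (simp add: split_beta')
  from R.borel_measurable_lebesgue_integral[OF this] show ?thesis
    unfolding Q2_def by simp
qed

lemma Q2_nonneg: "Q2 v \<omega> \<ge> 0" unfolding Q2_def by simp

lemma H_AE_sec:
  assumes "v \<in> H_F M F T"
  shows "AE \<omega> in M. integrable R (\<lambda>s. (v s \<omega>)\<^sup>2)"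
  using PRM.AE_integrable_snd[of "\<lambda>t \<omega>. (v t \<omega>)\<^sup>2"] assms unfolding H_iff by simp

lemma H_Q2_int:
  assumes "v \<in> H_F M F T"
  shows "integrable M (Q2 v)" "(\<integral>\<omega>. Q2 v \<omega> \<partial>M) = (\<integral>p. (v (fst p) (snd p))\<^sup>2 \<partial>N)"
  using PRM.integrable_snd[of "\<lambda>t \<omega>. (v t \<omega>)\<^sup>2"] PRM.integral_snd[of "\<lambda>t \<omega>. (v t \<omega>)\<^sup>2"]
    assms unfolding H_iff Q2_def by (simp_all add: split_beta')

lemma sec_int:
  fixes v :: "real \<Rightarrow> 'a \<Rightarrow> real"
  assumes "(\<lambda>(t,\<omega>). v t \<omega>) \<in> borel_measurable N" "\<omega> \<in> space M"
    "integrable R (\<lambda>s. (v s \<omega>)\<^sup>2)"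
  shows "integrable R (\<lambda>s. v s \<omega>)"
  by (rule fm_L1_of_L2[OF finite_R sec_meas[OF assms(1,2)] assms(3)])

lemma ind_sec_bound:
  fixes v :: "real \<Rightarrow> 'a \<Rightarrow> real"
  assumes "(\<lambda>(t,\<omega>). v t \<omega>) \<in> borel_measurable N" "\<omega> \<in> space M"
    "integrable R (\<lambda>s. (v s \<omega>)\<^sup>2)"
  shows "(\<integral>s. indicator {a..b} s * v s \<omega> \<partial>R)\<^sup>2 \<le> T * Q2 v \<omega>"
proof -
  have m: "(\<lambda>s. indicator {a..b} s * v s \<omega>) \<in> borel_measurable R"
    using sec_meas[OF assms(1,2)] ind_R_meas by (intro borel_measurable_times)
  have i: "integrable R (\<lambda>s. (indicator {a..b} s * v s \<omega>)\<^sup>2)"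
    by (rule Bochner_Integration.integrable_bound[OF assms(3)])
       (use m in \<open>auto simp: indicator_def power2_eq_square\<close>)
  have "(\<integral>s. indicator {a..b} s * v s \<omega> \<partial>R)\<^sup>2 \<le> T * (\<integral>s. (indicator {a..b} s * v s \<omega>)\<^sup>2 \<partial>R)"
    using fm_CS[OF finite_R m i] measure_R by simp
  also have "\<dots> \<le> T * Q2 v \<omega>"
    unfolding Q2_def using T_pos
    by (intro mult_left_mono integral_mono i assms(3)) (auto simp: indicator_def)
  finally show ?thesis .
qed

lemma state_R:
  fixes v :: "real \<Rightarrow> 'a \<Rightarrow> real"
  assumes "t \<in> {0..T}"
  shows "state x0 v t \<omega> = x0 + (\<integral>s. indicator {0..t} s * v s \<omega> \<partial>R)"
  using assms by (simp add: state_def lint_R)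

lemma state_bound:
  assumes "v \<in> H_F M F T"
  shows "AE \<omega> in M. \<forall>t\<in>{0..T}. (state x0 v t \<omega> - x0)\<^sup>2 \<le> T * Q2 v \<omega>"
  using H_AE_sec[OF assms]
proof (rule AE_mp[OF _ AE_I2[OF impI]])
  fix \<omega> assume "\<omega> \<in> space M" "integrable R (\<lambda>s. (v s \<omega>)\<^sup>2)"
  then show "\<forall>t\<in>{0..T}. (state x0 v t \<omega> - x0)\<^sup>2 \<le> T * Q2 v \<omega>"
    using ind_sec_bound[of v \<omega> 0] assms unfolding H_iff by (simp add: state_R)
qed

lemma sq_sum_bound: "((a::real) + b)\<^sup>2 \<le> 2 * a\<^sup>2 + 2 * b\<^sup>2"
proof -
  have "0 \<le> (a - b)\<^sup>2" by simp
  then show ?thesis by (simp add: power2_eq_square algebra_simps)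
qed

lemma state_sq_int_M:
  assumes "v \<in> H_F M F T" "t \<in> {0..T}"
  shows "integrable M (\<lambda>\<omega>. (state x0 v t \<omega>)\<^sup>2)"
proof (rule Bochner_Integration.integrable_bound)
  show "integrable M (\<lambda>\<omega>. 2 * x0\<^sup>2 + 2 * (T * Q2 v \<omega>))"
    using H_Q2_int[OF assms(1)] by auto
  have "(\<lambda>(t,\<omega>). state x0 v t \<omega>) \<in> borel_measurable N"
    using state_meas assms unfolding H_iff by blast
  then show "(\<lambda>\<omega>. (state x0 v t \<omega>)\<^sup>2) \<in> borel_measurable M"
    using sec_meas2[of "state x0 v" t] assms(2) by (simp add: space_R)
  show "AE \<omega> in M. norm ((state x0 v t \<omega>)\<^sup>2) \<le> norm (2 * x0\<^sup>2 + 2 * (T * Q2 v \<omega>))"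
    using state_bound[OF assms(1), of x0]
  proof eventually_elim
    case (elim \<omega>)
    then have "(state x0 v t \<omega> - x0)\<^sup>2 \<le> T * Q2 v \<omega>" using assms(2) by blast
    moreover have "(state x0 v t \<omega>)\<^sup>2 \<le> 2 * x0\<^sup>2 + 2 * (state x0 v t \<omega> - x0)\<^sup>2"
      using sq_sum_bound[of x0 "state x0 v t \<omega> - x0"] by simp
    ultimately show ?case using T_pos Q2_nonneg[of v \<omega>] by simp
  qed
qed

lemma const_snd_int:
  fixes f :: "'a \<Rightarrow> real"
  assumes "integrable M f"
  shows "integrable N (\<lambda>p. f (snd p))"
proof (rule PRM.Fubini_integrable)
  show "(\<lambda>p. f (snd p)) \<in> borel_measurable N" using assms by measurable
  show "integrable R (\<lambda>x. \<integral>y. norm (f (snd (x, y))) \<partial>M)" by simp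
  show "AE x in R. integrable M (\<lambda>y. f (snd (x, y)))" using assms by simp
qed

lemma state_sq_int_N:
  assumes "v \<in> H_F M F T"
  shows "integrable N (\<lambda>p. (state x0 v (fst p) (snd p))\<^sup>2)"
proof (rule Bochner_Integration.integrable_bound)
  show "integrable N (\<lambda>p. 2 * x0\<^sup>2 + 2 * (T * Q2 v (snd p)))"
    using const_snd_int[OF H_Q2_int(1)[OF assms]] by auto
  have "(\<lambda>(t,\<omega>). state x0 v t \<omega>) \<in> borel_measurable N"
    using state_meas assms unfolding H_iff by blast
  then show "(\<lambda>p. (state x0 v (fst p) (snd p))\<^sup>2) \<in> borel_measurable N"
    by (simp add: split_beta')
  have "AE p in N. fst p \<in> {0..T}"
    by (rule AE_I2) (auto simp: space_pair_measure space_R)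
  then show "AE p in N. norm ((state x0 v (fst p) (snd p))\<^sup>2) \<le> norm (2 * x0\<^sup>2 + 2 * (T * Q2 v (snd p)))"
    using AE_snd[OF state_bound[OF assms, of x0]]
  proof eventually_elim
    case (elim p)
    then have "(state x0 v (fst p) (snd p) - x0)\<^sup>2 \<le> T * Q2 v (snd p)" by blast
    moreover have "(state x0 v (fst p) (snd p))\<^sup>2 \<le> 2 * x0\<^sup>2 + 2 * (state x0 v (fst p) (snd p) - x0)\<^sup>2"
      using sq_sum_bound[of x0 "state x0 v (fst p) (snd p) - x0"] by simp
    ultimately show ?case using T_pos Q2_nonneg[of v "snd p"] by simp
  qed
qed

end

context ctrl begin

lemma meas_G_AE:
  fixes f g :: "'a \<Rightarrow> real"
  assumes f: "f \<in> borel_measurable M" and g: "g \<in> borel_measurable (G t)"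
    and ae: "AE \<omega> in M. f \<omega> = g \<omega>"
  shows "f \<in> borel_measurable (G t)"
proof -
  have gM: "g \<in> borel_measurable M" using G_M[OF g] .
  define E where "E = {\<omega>\<in>space M. f \<omega> \<noteq> g \<omega>}"
  have "{\<omega>\<in>space M. f \<omega> = g \<omega>} \<in> sets M" using f gM by (rule borel_measurable_eq)
  then have EM: "E \<in> sets M" unfolding E_def by (rule sets.sets_Collect_neg)
  have En: "E \<in> null_sets M" using ae EM unfolding E_def
    by (simp add: AE_iff_null null_sets_def)
  show ?thesis
  proof (rule borel_measurableI)
    fix S :: "real set" assume S: "open S"
    have "f -` S \<inter> space (G t) = ((g -` S \<inter> space M) - E) \<union> (f -` S \<inter> space M \<inter> E)"
      unfolding E_def by auto
    moreover have "(g -` S \<inter> space M) - E \<in> F t"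
    proof -
      have "g -` S \<inter> space M \<in> F t" using g S sets_G[of t] by (auto simp: measurable_def)
      moreover have "E \<in> F t" using F_null En by auto
      ultimately show ?thesis by (metis sets_G sets.Diff)
    qed
    moreover have "f -` S \<inter> space M \<inter> E \<in> F t"
    proof -
      have "f -` S \<inter> space M \<in> sets M" using f S by (auto simp: measurable_def)
      then have "f -` S \<inter> space M \<inter> E \<in> null_sets M"
        using En by (metis null_set_Int2 Int_commute)
      then show ?thesis using F_null by auto
    qed
    ultimately show "f -` S \<inter> space (G t) \<in> sets (G t)"
      by (metis sets_G sets.Un)
  qed
qed

lemma cond_exp_L2:
  fixes Z :: "'a \<Rightarrow> real"
  assumes Z: "Z \<in> borel_measurable M" "integrable M (\<lambda>\<omega>. (Z \<omega>)\<^sup>2)"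
  shows "integrable M (\<lambda>\<omega>. (real_cond_exp M (G t) Z \<omega>)\<^sup>2)"
proof -
  interpret S: sigma_finite_subalgebra M "G t" by (rule sfs)
  have iZ: "integrable M Z" by (rule fm_L1_of_L2[OF finite_measure_axioms Z])
  have convq: "convex_on UNIV (\<lambda>x::real. x\<^sup>2)"
    by (rule f''_ge0_imp_convex[where f' = "\<lambda>x. 2 * x" and f'' = "\<lambda>x. 2"])
       (auto intro!: derivative_eq_intros simp: has_real_derivative_iff_has_vector_derivative[symmetric])
  have J: "AE x in M. (real_cond_exp M (G t) Z x)\<^sup>2 \<le> real_cond_exp M (G t) (\<lambda>x. (Z x)\<^sup>2) x"
    by (rule S.real_cond_exp_jensens_inequality(2)[of Z UNIV _ _ "\<lambda>x. x\<^sup>2"])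
       (use iZ Z convq in auto)
  show ?thesis
  proof (rule Bochner_Integration.integrable_bound)
    show "integrable M (real_cond_exp M (G t) (\<lambda>x. (Z x)\<^sup>2))"
      using Z(2) by (rule S.real_cond_exp_int(1))
    show "(\<lambda>\<omega>. (real_cond_exp M (G t) Z \<omega>)\<^sup>2) \<in> borel_measurable M" by measurable
    show "AE x in M. norm ((real_cond_exp M (G t) Z x)\<^sup>2) \<le> norm (real_cond_exp M (G t) (\<lambda>x. (Z x)\<^sup>2) x)"
      using J by eventually_elim auto
  qed
qed

end

context ctrl begin

definition Zint :: "real \<Rightarrow> (real \<Rightarrow> 'a \<Rightarrow> real) \<Rightarrow> 'a \<Rightarrow> real" where
  "Zint t v \<omega> = (\<integral>s. indicator {0..t} s * v s \<omega> \<partial>R)"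

lemma Zint_meas:
  fixes v :: "real \<Rightarrow> 'a \<Rightarrow> real"
  assumes "(\<lambda>(t,\<omega>). v t \<omega>) \<in> borel_measurable N"
  shows "Zint t v \<in> borel_measurable M"
proof -
  have a: "(\<lambda>(\<omega>, s). v s \<omega>) \<in> borel_measurable (M \<Otimes>\<^sub>M R)" by (rule swap_meas[OF assms])
  have b: "(\<lambda>(\<omega>::'a, s). indicator {0..t} s :: real) \<in> borel_measurable (M \<Otimes>\<^sub>M R)"
    using measurable_comp[OF measurable_snd ind_R_meas[of 0 t]] by (simp add: o_def split_beta')
  have "(\<lambda>(\<omega>, s). indicator {0..t} s * v s \<omega>) \<in> borel_measurable (M \<Otimes>\<^sub>M R)"
    using borel_measurable_times[OF b a] by (simp add: split_beta')
  from R.borel_measurable_lebesgue_integral[OF this] show ?thesis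
    unfolding Zint_def by simp
qed

lemma Zint_sq_int:
  assumes v: "v \<in> H_F M F T"
  shows "integrable M (\<lambda>\<omega>. (Zint t v \<omega>)\<^sup>2)"
proof (rule Bochner_Integration.integrable_bound)
  show "integrable M (\<lambda>\<omega>. T * Q2 v \<omega>)" using H_Q2_int[OF v] by auto
  show "(\<lambda>\<omega>. (Zint t v \<omega>)\<^sup>2) \<in> borel_measurable M"
    using borel_measurable_power[OF Zint_meas, of v t 2] v unfolding H_iff by blast
  show "AE \<omega> in M. norm ((Zint t v \<omega>)\<^sup>2) \<le> norm (T * Q2 v \<omega>)"
    using H_AE_sec[OF v]
  proof (rule AE_mp[OF _ AE_I2[OF impI]])
    fix \<omega> assume "\<omega> \<in> space M" "integrable R (\<lambda>s. (v s \<omega>)\<^sup>2)"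
    then show "norm ((Zint t v \<omega>)\<^sup>2) \<le> norm (T * Q2 v \<omega>)"
      using ind_sec_bound[of v \<omega> 0 t] v T_pos Q2_nonneg[of v \<omega>] unfolding H_iff Zint_def by simp
  qed
qed

lemma ind_v_sq_int:
  assumes v: "v \<in> H_F M F T"
  shows "integrable N (\<lambda>p. (indicator {a..b} (fst p) * v (fst p) (snd p))\<^sup>2)"
proof (rule Bochner_Integration.integrable_bound)
  show "integrable N (\<lambda>p. (v (fst p) (snd p))\<^sup>2)" using v unfolding H_iff by (simp add: split_beta')
  have m: "(\<lambda>p. v (fst p) (snd p)) \<in> borel_measurable N" using v unfolding H_iff by (simp add: split_beta')
  have i: "(\<lambda>p. indicator {a..b} (fst p) :: real) \<in> borel_measurable N"
    using measurable_comp[OF measurable_fst ind_R_meas[of a b]] by (simp add: o_def)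
  show "(\<lambda>p. (indicator {a..b} (fst p) * v (fst p) (snd p))\<^sup>2) \<in> borel_measurable N"
    using m i by measurable
  show "AE p in N. norm ((indicator {a..b} (fst p) * v (fst p) (snd p))\<^sup>2) \<le> norm ((v (fst p) (snd p))\<^sup>2)"
    by (auto simp: indicator_def)
qed

lemma FubY:
  fixes Y :: "'a \<Rightarrow> real"
  assumes v: "v \<in> H_F M F T" and Y: "Y \<in> borel_measurable M" "integrable M (\<lambda>\<omega>. (Y \<omega>)\<^sup>2)"
  shows "integrable N (\<lambda>p. indicator {0..t} (fst p) * v (fst p) (snd p) * Y (snd p))"
    "(\<integral>\<omega>. Y \<omega> * Zint t v \<omega> \<partial>M) = (\<integral>s. indicator {0..t} s * (\<integral>\<omega>. v s \<omega> * Y \<omega> \<partial>M) \<partial>R)"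
proof -
  have m: "(\<lambda>p. v (fst p) (snd p)) \<in> borel_measurable N" using v unfolding H_iff by (simp add: split_beta')
  have i: "(\<lambda>p. indicator {0..t} (fst p) :: real) \<in> borel_measurable N"
    using measurable_comp[OF measurable_fst ind_R_meas[of 0 t]] by (simp add: o_def)
  show I: "integrable N (\<lambda>p. indicator {0..t} (fst p) * v (fst p) (snd p) * Y (snd p))"
    by (rule sq_integrable_mult[OF _ _ ind_v_sq_int[OF v] const_snd_int[OF Y(2)]])
       (use m i Y(1) in measurable)
  have e1: "\<And>\<omega>. (\<integral>s. indicator {0..t} s * v s \<omega> * Y \<omega> \<partial>R) = Y \<omega> * Zint t v \<omega>"
    unfolding Zint_def by (simp add: integral_mult_left_zero mult.commute)
  have e2: "\<And>s. (\<integral>\<omega>. indicator {0..t} s * v s \<omega> * Y \<omega> \<partial>M) = indicator {0..t} s * (\<integral>\<omega>. v s \<omega> * Y \<omega> \<partial>M)"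
    by (simp add: integral_mult_right_zero mult.assoc)
  have "(\<integral>\<omega>. Y \<omega> * Zint t v \<omega> \<partial>M) = (\<integral>\<omega>. (\<integral>s. indicator {0..t} s * v s \<omega> * Y \<omega> \<partial>R) \<partial>M)"
    by (simp only: e1)
  also have "\<dots> = (\<integral>s. (\<integral>\<omega>. indicator {0..t} s * v s \<omega> * Y \<omega> \<partial>M) \<partial>R)"
    using PRM.Fubini_integral[of "\<lambda>s \<omega>. indicator {0..t} s * v s \<omega> * Y \<omega>"] I
    by (simp add: split_beta')
  also have "\<dots> = (\<integral>s. indicator {0..t} s * (\<integral>\<omega>. v s \<omega> * Y \<omega> \<partial>M) \<partial>R)"
    by (simp only: e2)
  finally show "(\<integral>\<omega>. Y \<omega> * Zint t v \<omega> \<partial>M) = (\<integral>s. indicator {0..t} s * (\<integral>\<omega>. v s \<omega> * Y \<omega> \<partial>M) \<partial>R)" .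
qed

end

context ctrl begin

lemma Zint_adapted:
  assumes v: "v \<in> H_F M F T" and t: "t \<in> {0..T}"
  shows "Zint t v \<in> borel_measurable (G t)"
proof -
  interpret S: sigma_finite_subalgebra M "G t" by (rule sfs)
  define Z where "Z = Zint t v"
  define CE where "CE = real_cond_exp M (G t) Z"
  have vm: "(\<lambda>(t,\<omega>). v t \<omega>) \<in> borel_measurable N" using v unfolding H_iff by blast
  have vad: "\<forall>t\<in>{0..T}. v t \<in> borel_measurable (G t)" using v unfolding H_iff by blast
  have Zm: "Z \<in> borel_measurable M" unfolding Z_def using Zint_meas[OF vm] .
  have Z2: "integrable M (\<lambda>\<omega>. (Z \<omega>)\<^sup>2)" unfolding Z_def by (rule Zint_sq_int[OF v])
  have CEm: "CE \<in> borel_measurable M" "CE \<in> borel_measurable (G t)" unfolding CE_def by simp_all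
  have CE2: "integrable M (\<lambda>\<omega>. (CE \<omega>)\<^sup>2)" unfolding CE_def by (rule cond_exp_L2[OF Zm Z2])
  have CEZ: "integrable M (\<lambda>\<omega>. CE \<omega> * Z \<omega>)" by (rule sq_integrable_mult[OF CEm(1) Zm CE2 Z2])
  have ZZ: "integrable M (\<lambda>\<omega>. Z \<omega> * Z \<omega>)" by (rule sq_integrable_mult[OF Zm Zm Z2 Z2])
  have hv: "AE s in R. integrable M (\<lambda>\<omega>. (v s \<omega>)\<^sup>2)"
    using PRM.AE_integrable_fst[of "\<lambda>s \<omega>. (v s \<omega>)\<^sup>2"] v unfolding H_iff by simp
  have eq1: "(\<integral>\<omega>. CE \<omega> * Z \<omega> \<partial>M) = (\<integral>s. indicator {0..t} s * (\<integral>\<omega>. v s \<omega> * CE \<omega> \<partial>M) \<partial>R)"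
    unfolding Z_def by (rule FubY(2)[OF v CEm(1) CE2, unfolded Z_def])
  have eq2: "(\<integral>s. indicator {0..t} s * (\<integral>\<omega>. v s \<omega> * CE \<omega> \<partial>M) \<partial>R) =
             (\<integral>s. indicator {0..t} s * (\<integral>\<omega>. v s \<omega> * Z \<omega> \<partial>M) \<partial>R)"
  proof (rule integral_cong_AE)
    have "(\<lambda>(s, \<omega>). v s \<omega> * CE \<omega>) \<in> borel_measurable (R \<Otimes>\<^sub>M M)"
      using borel_measurable_times[OF cp_meas[OF vm] measurable_comp[OF measurable_snd CEm(1)]]
      by (simp add: split_beta' o_def)
    from borel_measurable_lebesgue_integral[OF this]
    show "(\<lambda>s. indicator {0..t} s * (\<integral>\<omega>. v s \<omega> * CE \<omega> \<partial>M)) \<in> borel_measurable R"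
      by (intro borel_measurable_times ind_R_meas) simp
    have "(\<lambda>(s, \<omega>). v s \<omega> * Z \<omega>) \<in> borel_measurable (R \<Otimes>\<^sub>M M)"
      using borel_measurable_times[OF cp_meas[OF vm] measurable_comp[OF measurable_snd Zm]]
      by (simp add: split_beta' o_def)
    from borel_measurable_lebesgue_integral[OF this]
    show "(\<lambda>s. indicator {0..t} s * (\<integral>\<omega>. v s \<omega> * Z \<omega> \<partial>M)) \<in> borel_measurable R"
      by (intro borel_measurable_times ind_R_meas) simp
    show "AE s in R. indicator {0..t} s * (\<integral>\<omega>. v s \<omega> * CE \<omega> \<partial>M) =
                     indicator {0..t} s * (\<integral>\<omega>. v s \<omega> * Z \<omega> \<partial>M)"
      using hv
    proof (rule AE_mp[OF _ AE_I2[OF impI]])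
      fix s assume s: "s \<in> space R" and i: "integrable M (\<lambda>\<omega>. (v s \<omega>)\<^sup>2)"
      show "indicator {0..t} s * (\<integral>\<omega>. v s \<omega> * CE \<omega> \<partial>M) =
                     indicator {0..t} s * (\<integral>\<omega>. v s \<omega> * Z \<omega> \<partial>M)"
      proof (cases "s \<in> {0..t}")
        case True
        have vsm: "v s \<in> borel_measurable M" using sec_meas2[OF vm s] .
        have "v s \<in> borel_measurable (G s)" using vad s unfolding space_R by (rule bspec)
        moreover have "s \<le> t" using True by simp
        ultimately have vsG: "v s \<in> borel_measurable (G t)" using G_mono by blast
        have "integrable M (\<lambda>\<omega>. v s \<omega> * Z \<omega>)" by (rule sq_integrable_mult[OF vsm Zm i Z2])
        then have "(\<integral>\<omega>. v s \<omega> * CE \<omega> \<partial>M) = (\<integral>\<omega>. v s \<omega> * Z \<omega> \<partial>M)"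
          unfolding CE_def using S.real_cond_exp_intg(2)[OF _ vsG Zm] by blast
        then show ?thesis by (simp only:)
      qed (simp add: indicator_def)
    qed
  qed
  have eq3: "(\<integral>s. indicator {0..t} s * (\<integral>\<omega>. v s \<omega> * Z \<omega> \<partial>M) \<partial>R) = (\<integral>\<omega>. Z \<omega> * Z \<omega> \<partial>M)"
    unfolding Z_def by (rule FubY(2)[OF v Zm Z2, unfolded Z_def, symmetric])
  have eq4: "(\<integral>\<omega>. CE \<omega> * CE \<omega> \<partial>M) = (\<integral>\<omega>. CE \<omega> * Z \<omega> \<partial>M)"
    unfolding CE_def using S.real_cond_exp_intg(2)[OF CEZ[unfolded CE_def] _ Zm] by simp
  have CECE: "integrable M (\<lambda>\<omega>. CE \<omega> * CE \<omega>)" by (rule sq_integrable_mult[OF CEm(1) CEm(1) CE2 CE2])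
  have sqe: "\<And>\<omega>. (Z \<omega> - CE \<omega>)\<^sup>2 = Z \<omega> * Z \<omega> - 2 * (CE \<omega> * Z \<omega>) + CE \<omega> * CE \<omega>"
    by (simp add: power2_eq_square algebra_simps)
  have "(\<integral>\<omega>. (Z \<omega> - CE \<omega>)\<^sup>2 \<partial>M) = (\<integral>\<omega>. Z \<omega> * Z \<omega> - 2 * (CE \<omega> * Z \<omega>) + CE \<omega> * CE \<omega> \<partial>M)"
    by (simp only: sqe)
  also have "\<dots> = (\<integral>\<omega>. Z \<omega> * Z \<omega> \<partial>M) - 2 * (\<integral>\<omega>. CE \<omega> * Z \<omega> \<partial>M) + (\<integral>\<omega>. CE \<omega> * CE \<omega> \<partial>M)"
    using ZZ CEZ CECE by simp
  also have "\<dots> = 0" using eq1 eq2 eq3 eq4 by simp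
  finally have "(\<integral>\<omega>. (Z \<omega> - CE \<omega>)\<^sup>2 \<partial>M) = 0" .
  moreover have "integrable M (\<lambda>\<omega>. (Z \<omega> - CE \<omega>)\<^sup>2)"
  proof -
    have "integrable M (\<lambda>\<omega>. Z \<omega> * Z \<omega> - 2 * (CE \<omega> * Z \<omega>) + CE \<omega> * CE \<omega>)"
      using ZZ CEZ CECE by simp
    then show ?thesis by (simp only: sqe)
  qed
  ultimately have "AE \<omega> in M. (Z \<omega> - CE \<omega>)\<^sup>2 = 0"
    using integral_nonneg_eq_0_iff_AE[of M "\<lambda>\<omega>. (Z \<omega> - CE \<omega>)\<^sup>2"] by simp
  then have "AE \<omega> in M. Z \<omega> = CE \<omega>" by eventually_elim simp
  then have "Z \<in> borel_measurable (G t)" by (rule meas_G_AE[OF Zm CEm(2)])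
  then show ?thesis unfolding Z_def .
qed

lemma state_adapted:
  assumes v: "v \<in> H_F M F T" and t: "t \<in> {0..T}"
  shows "state x0 v t \<in> borel_measurable (G t)"
proof -
  have "(\<lambda>\<omega>. x0 + Zint t v \<omega>) \<in> borel_measurable (G t)"
    using Zint_adapted[OF v t] by simp
  moreover have "state x0 v t = (\<lambda>\<omega>. x0 + Zint t v \<omega>)"
    using t by (simp add: fun_eq_iff state_R Zint_def)
  ultimately show ?thesis by simp
qed

end

context ctrl begin

abbreviation HH where "HH \<equiv> H_F M F T"

lemma H_meas: "v \<in> HH \<Longrightarrow> (\<lambda>p. v (fst p) (snd p)) \<in> borel_measurable N"
  unfolding H_iff by (simp add: split_beta')
lemma H_ad: "v \<in> HH \<Longrightarrow> s \<in> {0..T} \<Longrightarrow> v s \<in> borel_measurable (G s)"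
  unfolding H_iff by blast
lemma H_sq: "v \<in> HH \<Longrightarrow> integrable N (\<lambda>p. (v (fst p) (snd p))\<^sup>2)"
  unfolding H_iff by (simp add: split_beta')
lemma HI:
  assumes "(\<lambda>p. v (fst p) (snd p)) \<in> borel_measurable N"
    "\<And>s. s \<in> {0..T} \<Longrightarrow> v s \<in> borel_measurable (G s)"
    "integrable N (\<lambda>p. (v (fst p) (snd p))\<^sup>2)"
  shows "v \<in> HH"
  using assms unfolding H_iff by (simp add: split_beta')

lemma ip_eq: "H_inner M T v w = (\<integral>p. v (fst p) (snd p) * w (fst p) (snd p) \<partial>N)"
  unfolding H_inner_def time_prod_eq by (simp add: split_beta')

lemma H_prod_int: "v \<in> HH \<Longrightarrow> w \<in> HH \<Longrightarrow> integrable N (\<lambda>p. v (fst p) (snd p) * w (fst p) (snd p))"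
  by (rule sq_integrable_mult[OF H_meas H_meas H_sq H_sq])

lemma H_add: assumes "v \<in> HH" "w \<in> HH" shows "(\<lambda>s \<omega>. v s \<omega> + w s \<omega>) \<in> HH"
proof (rule HI)
  show "(\<lambda>p. v (fst p) (snd p) + w (fst p) (snd p)) \<in> borel_measurable N"
    using H_meas[OF assms(1)] H_meas[OF assms(2)] by simp
  show "\<And>s. s \<in> {0..T} \<Longrightarrow> (\<lambda>\<omega>. v s \<omega> + w s \<omega>) \<in> borel_measurable (G s)"
    using H_ad[OF assms(1)] H_ad[OF assms(2)] by simp
  show "integrable N (\<lambda>p. (v (fst p) (snd p) + w (fst p) (snd p))\<^sup>2)"
  proof (rule Bochner_Integration.integrable_bound)
    show "integrable N (\<lambda>p. 2 * (v (fst p) (snd p))\<^sup>2 + 2 * (w (fst p) (snd p))\<^sup>2)"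
      using H_sq[OF assms(1)] H_sq[OF assms(2)] by simp
    show "(\<lambda>p. (v (fst p) (snd p) + w (fst p) (snd p))\<^sup>2) \<in> borel_measurable N"
      using H_meas[OF assms(1)] H_meas[OF assms(2)] by simp
    show "AE p in N. norm ((v (fst p) (snd p) + w (fst p) (snd p))\<^sup>2)
        \<le> norm (2 * (v (fst p) (snd p))\<^sup>2 + 2 * (w (fst p) (snd p))\<^sup>2)"
      using sq_sum_bound by (intro AE_I2) simp
  qed
qed

lemma H_scale: assumes "v \<in> HH" shows "(\<lambda>s \<omega>. c * v s \<omega>) \<in> HH"
proof (rule HI)
  show "(\<lambda>p. c * v (fst p) (snd p)) \<in> borel_measurable N"
    using H_meas[OF assms(1)] by simp
  show "\<And>s. s \<in> {0..T} \<Longrightarrow> (\<lambda>\<omega>. c * v s \<omega>) \<in> borel_measurable (G s)"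
    using H_ad[OF assms(1)] by simp
  show "integrable N (\<lambda>p. (c * v (fst p) (snd p))\<^sup>2)"
    using H_sq[OF assms(1)] by (simp add: power_mult_distrib)
qed

lemma H_diff: assumes "v \<in> HH" "w \<in> HH" shows "(\<lambda>s \<omega>. v s \<omega> - w s \<omega>) \<in> HH"
  using H_add[OF assms(1) H_scale[OF assms(2), of "-1"]] by simp

lemma H_zero: "(\<lambda>s \<omega>. 0) \<in> HH"
  by (rule HI) auto

lemma H_sum: assumes "\<And>i. i \<in> I \<Longrightarrow> f i \<in> HH" shows "(\<lambda>s \<omega>. \<Sum>i\<in>I. f i s \<omega>) \<in> HH"
  using assms
proof (induction I rule: infinite_finite_induct)
  case (infinite A) then show ?case using H_zero by simp
next
  case empty then show ?case using H_zero by simp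
next
  case (insert x F)
  then show ?case using H_add[of "f x" "\<lambda>s \<omega>. \<Sum>i\<in>F. f i s \<omega>"] by simp
qed

lemma H_ind_xi:
  fixes \<xi> :: "'a \<Rightarrow> real"
  assumes A: "A \<in> sets borel" and a: "\<forall>s\<in>A. a \<le> s" and xi: "\<xi> \<in> borel_measurable (G a)"
    "integrable M (\<lambda>\<omega>. (\<xi> \<omega>)\<^sup>2)"
  shows "(\<lambda>s \<omega>. indicator A s * \<xi> \<omega>) \<in> HH"
proof (rule HI)
  have xM: "\<xi> \<in> borel_measurable M" by (rule G_M[OF xi(1)])
  have iA: "(indicator A :: real \<Rightarrow> real) \<in> borel_measurable R"
    unfolding R_def by (rule measurable_restrict_space1) (use A in simp)
  show "(\<lambda>p. indicator A (fst p) * \<xi> (snd p)) \<in> borel_measurable N"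
    using borel_measurable_times[OF measurable_comp[OF measurable_fst iA] measurable_comp[OF measurable_snd xM]]
    by (simp add: o_def)
  show "(\<lambda>\<omega>. indicator A s * \<xi> \<omega>) \<in> borel_measurable (G s)" if "s \<in> {0..T}" for s
  proof (cases "s \<in> A")
    case True
    then have "\<xi> \<in> borel_measurable (G s)" using G_mono[OF _ xi(1)] a by blast
    then show ?thesis using True by simp
  qed simp
  show "integrable N (\<lambda>p. (indicator A (fst p) * \<xi> (snd p))\<^sup>2)"
  proof (rule Bochner_Integration.integrable_bound)
    show "integrable N (\<lambda>p. (\<xi> (snd p))\<^sup>2)" using const_snd_int[OF xi(2)] .
    show "(\<lambda>p. (indicator A (fst p) * \<xi> (snd p))\<^sup>2) \<in> borel_measurable N"
      using borel_measurable_power[OF borel_measurable_times[OF measurable_comp[OF measurable_fst iA] measurable_comp[OF measurable_snd xM]], of 2]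
      by (simp add: o_def)
    show "AE p in N. norm ((indicator A (fst p) * \<xi> (snd p))\<^sup>2) \<le> norm ((\<xi> (snd p))\<^sup>2)"
      by (intro AE_I2) (simp add: indicator_def)
  qed
qed

lemma ip_sum:
  assumes "v \<in> HH" "\<And>i. i \<in> I \<Longrightarrow> f i \<in> HH" "finite I"
  shows "H_inner M T v (\<lambda>s \<omega>. \<Sum>i\<in>I. f i s \<omega>) = (\<Sum>i\<in>I. H_inner M T v (f i))"
proof -
  have "H_inner M T v (\<lambda>s \<omega>. \<Sum>i\<in>I. f i s \<omega>) = (\<integral>p. (\<Sum>i\<in>I. v (fst p) (snd p) * f i (fst p) (snd p)) \<partial>N)"
    unfolding ip_eq by (simp add: sum_distrib_left)
  also have "\<dots> = (\<Sum>i\<in>I. (\<integral>p. v (fst p) (snd p) * f i (fst p) (snd p) \<partial>N))"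
    by (rule Bochner_Integration.integral_sum) (use H_prod_int assms in blast)
  finally show ?thesis unfolding ip_eq .
qed

lemma ip_diff:
  assumes "u \<in> HH" "v \<in> HH" "w \<in> HH"
  shows "H_inner M T (\<lambda>s \<omega>. u s \<omega> - v s \<omega>) w = H_inner M T u w - H_inner M T v w"
proof -
  have "H_inner M T (\<lambda>s \<omega>. u s \<omega> - v s \<omega>) w =
    (\<integral>p. u (fst p) (snd p) * w (fst p) (snd p) - v (fst p) (snd p) * w (fst p) (snd p) \<partial>N)"
    unfolding ip_eq by (simp add: algebra_simps)
  also have "\<dots> = H_inner M T u w - H_inner M T v w"
    unfolding ip_eq using H_prod_int[OF assms(1,3)] H_prod_int[OF assms(2,3)] by simp
  finally show ?thesis .
qed

end

context ctrl begin

lemma indA_R_meas: "A \<in> sets borel \<Longrightarrow> (indicator A :: real \<Rightarrow> real) \<in> borel_measurable R"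
  unfolding R_def by (rule measurable_restrict_space1) simp

lemma indA_N_meas: "A \<in> sets borel \<Longrightarrow> (\<lambda>p. indicator A (fst p) :: real) \<in> borel_measurable N"
  using measurable_comp[OF measurable_fst indA_R_meas] by (simp add: o_def)

lemma snd_N_meas: "Y \<in> borel_measurable M \<Longrightarrow> (\<lambda>p. Y (snd p)) \<in> borel_measurable N"
  using measurable_comp[OF measurable_snd] by (simp add: o_def)

lemma indA_u_sq_int:
  assumes u: "u \<in> HH" and A: "A \<in> sets borel"
  shows "integrable N (\<lambda>p. (indicator A (fst p) * u (fst p) (snd p))\<^sup>2)"
proof (rule Bochner_Integration.integrable_bound)
  show "integrable N (\<lambda>p. (u (fst p) (snd p))\<^sup>2)" using H_sq[OF u] .
  show "(\<lambda>p. (indicator A (fst p) * u (fst p) (snd p))\<^sup>2) \<in> borel_measurable N"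
    using borel_measurable_power[OF borel_measurable_times[OF indA_N_meas[OF A] H_meas[OF u]], of 2] .
  show "AE p in N. norm ((indicator A (fst p) * u (fst p) (snd p))\<^sup>2) \<le> norm ((u (fst p) (snd p))\<^sup>2)"
    by (intro AE_I2) (auto simp: indicator_def)
qed

lemma uY_R_meas:
  fixes Y :: "'a \<Rightarrow> real"
  assumes u: "u \<in> HH" and Y: "Y \<in> borel_measurable M"
  shows "(\<lambda>s. \<integral>\<omega>. u s \<omega> * Y \<omega> \<partial>M) \<in> borel_measurable R"
proof -
  have "(\<lambda>(s, \<omega>). u s \<omega> * Y \<omega>) \<in> borel_measurable (R \<Otimes>\<^sub>M M)"
    using borel_measurable_times[OF H_meas[OF u] snd_N_meas[OF Y]] by (simp add: split_beta')
  from borel_measurable_lebesgue_integral[OF this] show ?thesis by simp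
qed

lemma N_fub:
  fixes Y :: "'a \<Rightarrow> real"
  assumes u: "u \<in> HH" and Y: "Y \<in> borel_measurable M" "integrable M (\<lambda>\<omega>. (Y \<omega>)\<^sup>2)"
    and A: "A \<in> sets borel"
  shows "integrable N (\<lambda>p. indicator A (fst p) * u (fst p) (snd p) * Y (snd p))"
    "(\<integral>p. indicator A (fst p) * u (fst p) (snd p) * Y (snd p) \<partial>N) =
     (\<integral>s. indicator A s * (\<integral>\<omega>. u s \<omega> * Y \<omega> \<partial>M) \<partial>R)"
proof -
  show I: "integrable N (\<lambda>p. indicator A (fst p) * u (fst p) (snd p) * Y (snd p))"
    by (rule sq_integrable_mult[OF borel_measurable_times[OF indA_N_meas[OF A] H_meas[OF u]]
          snd_N_meas[OF Y(1)] indA_u_sq_int[OF u A] const_snd_int[OF Y(2)]])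
  have e2: "\<And>s. (\<integral>\<omega>. indicator A s * u s \<omega> * Y \<omega> \<partial>M) = indicator A s * (\<integral>\<omega>. u s \<omega> * Y \<omega> \<partial>M)"
    by (simp add: integral_mult_right_zero mult.assoc)
  have "(\<integral>p. indicator A (fst p) * u (fst p) (snd p) * Y (snd p) \<partial>N) =
        (\<integral>s. (\<integral>\<omega>. indicator A s * u s \<omega> * Y \<omega> \<partial>M) \<partial>R)"
    using PRM.integral_fst[of "\<lambda>s \<omega>. indicator A s * u s \<omega> * Y \<omega>"] I
    by (simp add: split_beta')
  also have "\<dots> = (\<integral>s. indicator A s * (\<integral>\<omega>. u s \<omega> * Y \<omega> \<partial>M) \<partial>R)"
    by (simp only: e2)
  finally show "(\<integral>p. indicator A (fst p) * u (fst p) (snd p) * Y (snd p) \<partial>N) =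
     (\<integral>s. indicator A s * (\<integral>\<omega>. u s \<omega> * Y \<omega> \<partial>M) \<partial>R)" .
qed

lemma swapCE:
  fixes Y :: "'a \<Rightarrow> real"
  assumes u: "u \<in> HH" and Y: "Y \<in> borel_measurable M" "integrable M (\<lambda>\<omega>. (Y \<omega>)\<^sup>2)"
    and A: "A \<in> sets borel" "A \<subseteq> {0..b}" "b \<le> T"
  shows "(\<integral>p. indicator A (fst p) * u (fst p) (snd p) * Y (snd p) \<partial>N) =
         (\<integral>p. indicator A (fst p) * u (fst p) (snd p) * real_cond_exp M (G b) Y (snd p) \<partial>N)"
proof -
  interpret S: sigma_finite_subalgebra M "G b" by (rule sfs)
  define CE where "CE = real_cond_exp M (G b) Y"
  have CEm: "CE \<in> borel_measurable M" unfolding CE_def by simp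
  have CE2: "integrable M (\<lambda>\<omega>. (CE \<omega>)\<^sup>2)" unfolding CE_def by (rule cond_exp_L2[OF Y])
  have hv: "AE s in R. integrable M (\<lambda>\<omega>. (u s \<omega>)\<^sup>2)"
    using PRM.AE_integrable_fst[of "\<lambda>s \<omega>. (u s \<omega>)\<^sup>2"] H_sq[OF u] by (simp add: split_beta')
  have "(\<integral>s. indicator A s * (\<integral>\<omega>. u s \<omega> * Y \<omega> \<partial>M) \<partial>R) =
        (\<integral>s. indicator A s * (\<integral>\<omega>. u s \<omega> * CE \<omega> \<partial>M) \<partial>R)"
  proof (rule integral_cong_AE)
    show "(\<lambda>s. indicator A s * (\<integral>\<omega>. u s \<omega> * Y \<omega> \<partial>M)) \<in> borel_measurable R"
      by (rule borel_measurable_times[OF indA_R_meas[OF A(1)] uY_R_meas[OF u Y(1)]])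
    show "(\<lambda>s. indicator A s * (\<integral>\<omega>. u s \<omega> * CE \<omega> \<partial>M)) \<in> borel_measurable R"
      by (rule borel_measurable_times[OF indA_R_meas[OF A(1)] uY_R_meas[OF u CEm]])
    show "AE s in R. indicator A s * (\<integral>\<omega>. u s \<omega> * Y \<omega> \<partial>M) =
                     indicator A s * (\<integral>\<omega>. u s \<omega> * CE \<omega> \<partial>M)"
      using hv
    proof (rule AE_mp[OF _ AE_I2[OF impI]])
      fix s assume s: "s \<in> space R" and i: "integrable M (\<lambda>\<omega>. (u s \<omega>)\<^sup>2)"
      show "indicator A s * (\<integral>\<omega>. u s \<omega> * Y \<omega> \<partial>M) = indicator A s * (\<integral>\<omega>. u s \<omega> * CE \<omega> \<partial>M)"
      proof (cases "s \<in> A")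
        case True
        have sT: "s \<in> {0..T}" using s unfolding space_R .
        have usm: "u s \<in> borel_measurable M" using sec_meas2[of u s] H_meas[OF u] s
          by (simp add: split_beta')
        have "u s \<in> borel_measurable (G s)" by (rule H_ad[OF u sT])
        moreover have "s \<le> b" using True A(2) by auto
        ultimately have usG: "u s \<in> borel_measurable (G b)" using G_mono by blast
        have "integrable M (\<lambda>\<omega>. u s \<omega> * Y \<omega>)" by (rule sq_integrable_mult[OF usm Y(1) i Y(2)])
        then have "(\<integral>\<omega>. u s \<omega> * CE \<omega> \<partial>M) = (\<integral>\<omega>. u s \<omega> * Y \<omega> \<partial>M)"
          unfolding CE_def using S.real_cond_exp_intg(2)[OF _ usG Y(1)] by blast
        then show ?thesis by (simp only:)
      qed (simp add: indicator_def)
    qed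
  qed
  then show ?thesis
    using N_fub(2)[OF u Y A(1)] N_fub(2)[OF u CEm CE2 A(1)] unfolding CE_def by simp
qed

lemma prod_sep:
  fixes g :: "'a \<Rightarrow> real"
  assumes g: "integrable M g" and A: "A \<in> sets borel" "A \<subseteq> {0..T}"
  shows "integrable N (\<lambda>p. indicator A (fst p) * g (snd p))"
    "(\<integral>p. indicator A (fst p) * g (snd p) \<partial>N) = measure lborel A * (\<integral>\<omega>. g \<omega> \<partial>M)"
proof -
  show I: "integrable N (\<lambda>p. indicator A (fst p) * g (snd p))"
  proof (rule Bochner_Integration.integrable_bound)
    show "integrable N (\<lambda>p. g (snd p))" using const_snd_int[OF g] .
    show "(\<lambda>p. indicator A (fst p) * g (snd p)) \<in> borel_measurable N"
      using borel_measurable_times[OF indA_N_meas[OF A(1)] snd_N_meas[OF borel_measurable_integrable[OF g]]] .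
    show "AE p in N. norm (indicator A (fst p) * g (snd p)) \<le> norm (g (snd p))"
      by (intro AE_I2) (auto simp: indicator_def)
  qed
  have "(\<integral>p. indicator A (fst p) * g (snd p) \<partial>N) = (\<integral>s. (\<integral>\<omega>. indicator A s * g \<omega> \<partial>M) \<partial>R)"
    using PRM.integral_fst[of "\<lambda>s \<omega>. indicator A s * g \<omega>"] I by (simp add: split_beta')
  also have "\<dots> = (\<integral>s. indicator A s * (\<integral>\<omega>. g \<omega> \<partial>M) \<partial>R)"
    by (simp add: integral_mult_right_zero)
  also have "\<dots> = measure R (A \<inter> space R) * (\<integral>\<omega>. g \<omega> \<partial>M)"
    by (simp add: integral_mult_left_zero)
  also have "measure R (A \<inter> space R) = measure lborel A"
  proof -
    have "A \<inter> space R = A" using A(2) space_R by auto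
    moreover have "measure R A = measure lborel A"
      unfolding R_def by (rule measure_restrict_space) (use A in auto)
    ultimately show ?thesis by simp
  qed
  finally show "(\<integral>p. indicator A (fst p) * g (snd p) \<partial>N) = measure lborel A * (\<integral>\<omega>. g \<omega> \<partial>M)" .
qed

lemma CE_tel:
  fixes \<xi> :: "'a \<Rightarrow> real"
  assumes xi: "\<xi> \<in> borel_measurable M" "integrable M (\<lambda>\<omega>. (\<xi> \<omega>)\<^sup>2)" and ab: "a \<le> b"
  shows "(\<integral>\<omega>. (real_cond_exp M (G b) \<xi> \<omega> - real_cond_exp M (G a) \<xi> \<omega>)\<^sup>2 \<partial>M) =
         (\<integral>\<omega>. (real_cond_exp M (G b) \<xi> \<omega>)\<^sup>2 \<partial>M) - (\<integral>\<omega>. (real_cond_exp M (G a) \<xi> \<omega>)\<^sup>2 \<partial>M)"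
    and "(\<integral>\<omega>. (real_cond_exp M (G a) \<xi> \<omega>)\<^sup>2 \<partial>M) \<le> (\<integral>\<omega>. (\<xi> \<omega>)\<^sup>2 \<partial>M)"
proof -
  interpret Sa: sigma_finite_subalgebra M "G a" by (rule sfs)
  interpret Sb: sigma_finite_subalgebra M "G b" by (rule sfs)
  define A where "A = real_cond_exp M (G a) \<xi>"
  define B where "B = real_cond_exp M (G b) \<xi>"
  have Am: "A \<in> borel_measurable M" "A \<in> borel_measurable (G a)" unfolding A_def by simp_all
  have AmG: "A \<in> borel_measurable (G b)" using G_mono[OF ab Am(2)] .
  have Bm: "B \<in> borel_measurable M" unfolding B_def by simp
  have A2: "integrable M (\<lambda>\<omega>. (A \<omega>)\<^sup>2)" unfolding A_def by (rule cond_exp_L2[OF xi])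
  have B2: "integrable M (\<lambda>\<omega>. (B \<omega>)\<^sup>2)" unfolding B_def by (rule cond_exp_L2[OF xi])
  have Axi: "integrable M (\<lambda>\<omega>. A \<omega> * \<xi> \<omega>)" by (rule sq_integrable_mult[OF Am(1) xi(1) A2 xi(2)])
  have Bxi: "integrable M (\<lambda>\<omega>. B \<omega> * \<xi> \<omega>)" by (rule sq_integrable_mult[OF Bm xi(1) B2 xi(2)])
  have AB: "integrable M (\<lambda>\<omega>. A \<omega> * B \<omega>)" by (rule sq_integrable_mult[OF Am(1) Bm A2 B2])
  have AA: "integrable M (\<lambda>\<omega>. A \<omega> * A \<omega>)" by (rule sq_integrable_mult[OF Am(1) Am(1) A2 A2])
  have BB: "integrable M (\<lambda>\<omega>. B \<omega> * B \<omega>)" by (rule sq_integrable_mult[OF Bm Bm B2 B2])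
  have e1: "(\<integral>\<omega>. A \<omega> * B \<omega> \<partial>M) = (\<integral>\<omega>. A \<omega> * \<xi> \<omega> \<partial>M)"
    unfolding B_def using Sb.real_cond_exp_intg(2)[OF Axi AmG xi(1)] by blast
  have e2: "(\<integral>\<omega>. A \<omega> * A \<omega> \<partial>M) = (\<integral>\<omega>. A \<omega> * \<xi> \<omega> \<partial>M)"
    using Sa.real_cond_exp_intg(2)[OF Axi Am(2) xi(1)] unfolding A_def by blast
  have sqe: "\<And>\<omega>. (B \<omega> - A \<omega>)\<^sup>2 = B \<omega> * B \<omega> - 2 * (A \<omega> * B \<omega>) + A \<omega> * A \<omega>"
    by (simp add: power2_eq_square algebra_simps)
  have "(\<integral>\<omega>. (B \<omega> - A \<omega>)\<^sup>2 \<partial>M) = (\<integral>\<omega>. B \<omega> * B \<omega> - 2 * (A \<omega> * B \<omega>) + A \<omega> * A \<omega> \<partial>M)"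
    by (simp only: sqe)
  also have "\<dots> = (\<integral>\<omega>. B \<omega> * B \<omega> \<partial>M) - 2 * (\<integral>\<omega>. A \<omega> * B \<omega> \<partial>M) + (\<integral>\<omega>. A \<omega> * A \<omega> \<partial>M)"
    using AB AA BB by simp
  also have "\<dots> = (\<integral>\<omega>. B \<omega> * B \<omega> \<partial>M) - (\<integral>\<omega>. A \<omega> * A \<omega> \<partial>M)"
    using e1 e2 by simp
  finally have "(\<integral>\<omega>. (B \<omega> - A \<omega>)\<^sup>2 \<partial>M) = (\<integral>\<omega>. (B \<omega>)\<^sup>2 \<partial>M) - (\<integral>\<omega>. (A \<omega>)\<^sup>2 \<partial>M)"
    by (simp add: power2_eq_square)
  then show "(\<integral>\<omega>. (real_cond_exp M (G b) \<xi> \<omega> - real_cond_exp M (G a) \<xi> \<omega>)\<^sup>2 \<partial>M) =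
         (\<integral>\<omega>. (real_cond_exp M (G b) \<xi> \<omega>)\<^sup>2 \<partial>M) - (\<integral>\<omega>. (real_cond_exp M (G a) \<xi> \<omega>)\<^sup>2 \<partial>M)"
    unfolding A_def B_def .
  have "(\<integral>\<omega>. A \<omega> * \<xi> \<omega> \<partial>M) \<le> ((\<integral>\<omega>. (A \<omega>)\<^sup>2 \<partial>M) + (\<integral>\<omega>. (\<xi> \<omega>)\<^sup>2 \<partial>M)) / 2"
  proof -
    have "(\<integral>\<omega>. A \<omega> * \<xi> \<omega> \<partial>M) \<le> (\<integral>\<omega>. ((A \<omega>)\<^sup>2 + (\<xi> \<omega>)\<^sup>2) / 2 \<partial>M)"
    proof (rule integral_mono[OF Axi])
      show "integrable M (\<lambda>\<omega>. ((A \<omega>)\<^sup>2 + (\<xi> \<omega>)\<^sup>2) / 2)" using A2 xi(2) by simp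
      fix \<omega>
      have "0 \<le> (A \<omega> - \<xi> \<omega>)\<^sup>2" by simp
      then show "A \<omega> * \<xi> \<omega> \<le> ((A \<omega>)\<^sup>2 + (\<xi> \<omega>)\<^sup>2) / 2" by (simp add: power2_eq_square algebra_simps)
    qed
    also have "\<dots> = ((\<integral>\<omega>. (A \<omega>)\<^sup>2 \<partial>M) + (\<integral>\<omega>. (\<xi> \<omega>)\<^sup>2 \<partial>M)) / 2" using A2 xi(2) by simp
    finally show ?thesis .
  qed
  moreover have "(\<integral>\<omega>. (A \<omega>)\<^sup>2 \<partial>M) = (\<integral>\<omega>. A \<omega> * \<xi> \<omega> \<partial>M)" using e2 by (simp add: power2_eq_square)
  ultimately show "(\<integral>\<omega>. (real_cond_exp M (G a) \<xi> \<omega>)\<^sup>2 \<partial>M) \<le> (\<integral>\<omega>. (\<xi> \<omega>)\<^sup>2 \<partial>M)"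
    unfolding A_def by simp
qed

end

context ctrl begin

lemma split_int:
  fixes Y0 :: "'a \<Rightarrow> real" and Yf :: "nat \<Rightarrow> 'a \<Rightarrow> real"
  assumes d: "d \<in> HH" and Y0: "Y0 \<in> borel_measurable M" "integrable M (\<lambda>\<omega>. (Y0 \<omega>)\<^sup>2)"
    and Yf: "\<And>i. Yf i \<in> borel_measurable M" "\<And>i. integrable M (\<lambda>\<omega>. (Yf i \<omega>)\<^sup>2)"
    and A0: "A0 \<in> sets borel" and A: "\<And>i. A i \<in> sets borel"
  shows "(\<integral>p. d (fst p) (snd p) * (indicator A0 (fst p) * Y0 (snd p) +
            (\<Sum>i<K. indicator (A i) (fst p) * Yf i (snd p))) \<partial>N) =
         (\<integral>p. indicator A0 (fst p) * d (fst p) (snd p) * Y0 (snd p) \<partial>N) +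
         (\<Sum>i<K. (\<integral>p. indicator (A i) (fst p) * d (fst p) (snd p) * Yf i (snd p) \<partial>N))"
proof -
  have eq: "\<And>p. d (fst p) (snd p) * (indicator A0 (fst p) * Y0 (snd p) +
            (\<Sum>i<K. indicator (A i) (fst p) * Yf i (snd p))) =
         indicator A0 (fst p) * d (fst p) (snd p) * Y0 (snd p) +
         (\<Sum>i<K. indicator (A i) (fst p) * d (fst p) (snd p) * Yf i (snd p))"
    by (simp add: sum_distrib_left distrib_left mult.commute mult.left_commute del: sum_mult_indicator)
  have i0: "integrable N (\<lambda>p. indicator A0 (fst p) * d (fst p) (snd p) * Y0 (snd p))"
    by (rule N_fub(1)[OF d Y0 A0])
  have ii: "\<And>i. integrable N (\<lambda>p. indicator (A i) (fst p) * d (fst p) (snd p) * Yf i (snd p))"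
    by (rule N_fub(1)[OF d Yf A])
  have "(\<integral>p. d (fst p) (snd p) * (indicator A0 (fst p) * Y0 (snd p) +
            (\<Sum>i<K. indicator (A i) (fst p) * Yf i (snd p))) \<partial>N) =
        (\<integral>p. indicator A0 (fst p) * d (fst p) (snd p) * Y0 (snd p) +
         (\<Sum>i<K. indicator (A i) (fst p) * d (fst p) (snd p) * Yf i (snd p)) \<partial>N)"
    by (simp only: eq)
  also have "\<dots> = (\<integral>p. indicator A0 (fst p) * d (fst p) (snd p) * Y0 (snd p) \<partial>N) +
         (\<integral>p. (\<Sum>i<K. indicator (A i) (fst p) * d (fst p) (snd p) * Yf i (snd p)) \<partial>N)"
    by (rule Bochner_Integration.integral_add[OF i0]) (use ii in auto)
  also have "(\<integral>p. (\<Sum>i<K. indicator (A i) (fst p) * d (fst p) (snd p) * Yf i (snd p)) \<partial>N) =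
     (\<Sum>i<K. (\<integral>p. indicator (A i) (fst p) * d (fst p) (snd p) * Yf i (snd p) \<partial>N))"
    by (rule Bochner_Integration.integral_sum) (use ii in auto)
  finally show ?thesis .
qed

lemma ind_tel:
  fixes tt :: "nat \<Rightarrow> real"
  assumes "tt 0 = 0" "\<And>i. 0 \<le> tt i" "\<And>i. tt i \<le> tt (Suc i)"
  shows "indicator {0..tt K} s = indicator {0} s + (\<Sum>i<K. indicator {tt i<..tt (Suc i)} s :: real)"
proof -
  have "indicator {tt i<..tt (Suc i)} s = indicator {0..tt (Suc i)} s - (indicator {0..tt i} s :: real)" for i
    using assms(2)[of i] assms(3)[of i] by (auto simp: indicator_def)
  then have "(\<Sum>i<K. indicator {tt i<..tt (Suc i)} s :: real) = indicator {0..tt K} s - indicator {0..tt 0} s"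
    using sum_lessThan_telescope[of "\<lambda>i. indicator {0..tt i} s :: real" K] by simp
  then show ?thesis using assms(1) by simp
qed

lemma ind_sq: "(indicator A x :: real) * indicator A x = indicator A x"
  by (simp add: indicator_def)

end

context ctrl begin

lemma K_approx:
  fixes \<xi> :: "'a \<Rightarrow> real"
  assumes xi: "\<xi> \<in> borel_measurable M" "integrable M (\<lambda>\<omega>. (\<xi> \<omega>)\<^sup>2)"
    and t: "t \<in> {0..T}" and K: "K > (0::nat)" and e: "e > 0"
  shows "\<exists>w\<in>HH. \<forall>d\<in>HH.
    \<bar>(\<integral>p. indicator {0..t} (fst p) * d (fst p) (snd p) * \<xi> (snd p) \<partial>N) - H_inner M T d w\<bar>
      \<le> (e * (t / K) * (\<integral>\<omega>. (\<xi> \<omega>)\<^sup>2 \<partial>M) + (\<integral>p. (d (fst p) (snd p))\<^sup>2 \<partial>N) / e) / 2"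
proof -
  define tt where "tt i = real i * t / real K" for i
  define xi where "xi i = real_cond_exp M (G (tt i)) \<xi>" for i
  define I where "I i = {tt i<..tt (Suc i)}" for i
  define w where "w = (\<lambda>s \<omega>. indicator {0} s * xi 0 \<omega> + (\<Sum>i<K. indicator (I i) s * xi i \<omega>))"
  have tt0: "tt 0 = 0" unfolding tt_def by simp
  have ttK: "tt K = t" unfolding tt_def using K by simp
  have ttpos: "\<And>i. 0 \<le> tt i" unfolding tt_def using t by simp
  have ttmono: "\<And>i. tt i \<le> tt (Suc i)" unfolding tt_def using t K
    by (intro divide_right_mono mult_right_mono) auto
  have ttstep: "\<And>i. tt (Suc i) - tt i = t / K" unfolding tt_def by (simp add: field_simps add_divide_distrib)
  have ttle: "\<And>i. i \<le> K \<Longrightarrow> tt i \<le> t" unfolding tt_def using t K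
    by (simp add: field_simps mult_left_mono)
  have ttT: "\<And>i. i \<le> K \<Longrightarrow> tt i \<le> T" using ttle t by fastforce
  have xim: "\<And>i. xi i \<in> borel_measurable M" "\<And>i. xi i \<in> borel_measurable (G (tt i))"
    unfolding xi_def by simp_all
  have xi2: "\<And>i. integrable M (\<lambda>\<omega>. (xi i \<omega>)\<^sup>2)" unfolding xi_def by (rule cond_exp_L2[OF xi])
  have Ib: "\<And>i. I i \<in> sets borel" unfolding I_def by simp
  have wH: "w \<in> HH"
    unfolding w_def
  proof (rule H_add)
    show "(\<lambda>s \<omega>. indicator {0} s * xi 0 \<omega>) \<in> HH"
      by (rule H_ind_xi[of _ 0]) (use xim(2)[of 0] xi2 tt0 in auto)
    show "(\<lambda>s \<omega>. \<Sum>i<K. indicator (I i) s * xi i \<omega>) \<in> HH"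
    proof (rule H_sum)
      fix i show "(\<lambda>s \<omega>. indicator (I i) s * xi i \<omega>) \<in> HH"
        by (rule H_ind_xi[of _ "tt i"]) (use xim(2)[of i] xi2 Ib in \<open>auto simp: I_def\<close>)
    qed
  qed
  have tel: "(\<Sum>i<K. (\<integral>\<omega>. (xi (Suc i) \<omega> - xi i \<omega>)\<^sup>2 \<partial>M)) \<le> (\<integral>\<omega>. (\<xi> \<omega>)\<^sup>2 \<partial>M)"
  proof -
    have "(\<Sum>i<K. (\<integral>\<omega>. (xi (Suc i) \<omega> - xi i \<omega>)\<^sup>2 \<partial>M)) =
          (\<Sum>i<K. (\<integral>\<omega>. (xi (Suc i) \<omega>)\<^sup>2 \<partial>M) - (\<integral>\<omega>. (xi i \<omega>)\<^sup>2 \<partial>M))"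
      unfolding xi_def using CE_tel(1)[OF xi ttmono] by simp
    also have "\<dots> = (\<integral>\<omega>. (xi K \<omega>)\<^sup>2 \<partial>M) - (\<integral>\<omega>. (xi 0 \<omega>)\<^sup>2 \<partial>M)"
      by (rule sum_lessThan_telescope)
    also have "\<dots> \<le> (\<integral>\<omega>. (xi K \<omega>)\<^sup>2 \<partial>M)" by simp
    also have "\<dots> \<le> (\<integral>\<omega>. (\<xi> \<omega>)\<^sup>2 \<partial>M)" unfolding xi_def using CE_tel(2)[OF xi order.refl] .
    finally show ?thesis .
  qed
  show ?thesis
  proof (intro bexI[OF _ wH] ballI)
    fix d assume d: "d \<in> HH"
    define A where "A = (\<integral>p. indicator {0..t} (fst p) * d (fst p) (snd p) * \<xi> (snd p) \<partial>N)"
    define Ei where "Ei i = (\<integral>p. indicator (I i) (fst p) * d (fst p) (snd p) * (xi (Suc i) (snd p) - xi i (snd p)) \<partial>N)" for i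
    have P: "\<And>s. indicator {0..t} s = indicator {0} s + (\<Sum>i<K. indicator (I i) s :: real)"
      using ind_tel[of tt K, OF tt0 ttpos ttmono] ttK unfolding I_def by simp
    have A1: "A = (\<integral>p. indicator {0} (fst p) * d (fst p) (snd p) * \<xi> (snd p) \<partial>N) +
         (\<Sum>i<K. (\<integral>p. indicator (I i) (fst p) * d (fst p) (snd p) * \<xi> (snd p) \<partial>N))"
    proof -
      have "A = (\<integral>p. d (fst p) (snd p) * (indicator {0} (fst p) * \<xi> (snd p) +
            (\<Sum>i<K. indicator (I i) (fst p) * \<xi> (snd p))) \<partial>N)"
        unfolding A_def
      proof (rule Bochner_Integration.integral_cong[OF refl])
        fix p
        have alg: "\<And>a S x y::real. (a + S) * y * x = y * (a * x + S * x)" by (simp add: algebra_simps)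
        have "(\<Sum>i<K. indicator (I i) (fst p) * \<xi> (snd p)) = (\<Sum>i<K. indicator (I i) (fst p)) * \<xi> (snd p)"
          by (rule sum_distrib_right[symmetric])
        then show "indicator {0..t} (fst p) * d (fst p) (snd p) * \<xi> (snd p) =
           d (fst p) (snd p) * (indicator {0} (fst p) * \<xi> (snd p) + (\<Sum>i<K. indicator (I i) (fst p) * \<xi> (snd p)))"
          by (simp only: P alg)
      qed
      also have "\<dots> = (\<integral>p. indicator {0} (fst p) * d (fst p) (snd p) * \<xi> (snd p) \<partial>N) +
         (\<Sum>i<K. (\<integral>p. indicator (I i) (fst p) * d (fst p) (snd p) * \<xi> (snd p) \<partial>N))"
        by (rule split_int[where Yf="\<lambda>i. \<xi>", OF d xi xi _ Ib]) simp
      finally show ?thesis .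
    qed
    have W1: "H_inner M T d w = (\<integral>p. indicator {0} (fst p) * d (fst p) (snd p) * xi 0 (snd p) \<partial>N) +
         (\<Sum>i<K. (\<integral>p. indicator (I i) (fst p) * d (fst p) (snd p) * xi i (snd p) \<partial>N))"
      unfolding ip_eq w_def by (rule split_int[where Yf=xi, OF d xim(1)[of 0] xi2[of 0] xim(1) xi2 _ Ib]) simp
    have s0: "(\<integral>p. indicator {0} (fst p) * d (fst p) (snd p) * \<xi> (snd p) \<partial>N) =
              (\<integral>p. indicator {0} (fst p) * d (fst p) (snd p) * xi 0 (snd p) \<partial>N)"
      unfolding xi_def tt0 by (rule swapCE[OF d xi]) (use T_pos in auto)
    have si: "(\<integral>p. indicator (I i) (fst p) * d (fst p) (snd p) * \<xi> (snd p) \<partial>N) -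
              (\<integral>p. indicator (I i) (fst p) * d (fst p) (snd p) * xi i (snd p) \<partial>N) = Ei i"
      if i: "i < K" for i
    proof -
      have "(\<integral>p. indicator (I i) (fst p) * d (fst p) (snd p) * \<xi> (snd p) \<partial>N) =
            (\<integral>p. indicator (I i) (fst p) * d (fst p) (snd p) * xi (Suc i) (snd p) \<partial>N)"
        unfolding xi_def
        by (rule swapCE[OF d xi Ib]) (use ttpos[of i] ttT[of "Suc i"] i in \<open>auto simp: I_def\<close>)
      also have "\<dots> - (\<integral>p. indicator (I i) (fst p) * d (fst p) (snd p) * xi i (snd p) \<partial>N) = Ei i"
        unfolding Ei_def
        using N_fub(1)[OF d xim(1) xi2 Ib, of i "Suc i"] N_fub(1)[OF d xim(1) xi2 Ib, of i i]
        by (simp add: algebra_simps)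
      finally show ?thesis .
    qed
    have AW: "A - H_inner M T d w = (\<Sum>i<K. Ei i)"
      unfolding A1 W1 s0 using si by (simp add: sum_subtractf[symmetric])
    have Ebound: "\<bar>Ei i\<bar> \<le> (e * ((t / K) * (\<integral>\<omega>. (xi (Suc i) \<omega> - xi i \<omega>)\<^sup>2 \<partial>M)) +
        (\<integral>p. indicator (I i) (fst p) * (d (fst p) (snd p))\<^sup>2 \<partial>N) / e) / 2" if i: "i < K" for i
    proof -
      define f where "f p = indicator (I i) (fst p) * (xi (Suc i) (snd p) - xi i (snd p))" for p
      define g where "g p = indicator (I i) (fst p) * d (fst p) (snd p)" for p
      have Dm: "(\<lambda>\<omega>. xi (Suc i) \<omega> - xi i \<omega>) \<in> borel_measurable M" using xim(1) by simp
      have D2: "integrable M (\<lambda>\<omega>. (xi (Suc i) \<omega> - xi i \<omega>)\<^sup>2)"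
      proof (rule Bochner_Integration.integrable_bound)
        show "integrable M (\<lambda>\<omega>. 2 * (xi (Suc i) \<omega>)\<^sup>2 + 2 * (xi i \<omega>)\<^sup>2)" using xi2 by simp
        show "(\<lambda>\<omega>. (xi (Suc i) \<omega> - xi i \<omega>)\<^sup>2) \<in> borel_measurable M" using Dm by simp
        show "AE \<omega> in M. norm ((xi (Suc i) \<omega> - xi i \<omega>)\<^sup>2) \<le> norm (2 * (xi (Suc i) \<omega>)\<^sup>2 + 2 * (xi i \<omega>)\<^sup>2)"
          using sq_sum_bound[of "xi (Suc i) _" "- xi i _"] by (intro AE_I2) simp
      qed
      have f2eq: "\<And>p. (f p)\<^sup>2 = indicator (I i) (fst p) * (xi (Suc i) (snd p) - xi i (snd p))\<^sup>2"
        unfolding f_def by (simp add: power2_eq_square indicator_def)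
      have g2eq: "\<And>p. (g p)\<^sup>2 = indicator (I i) (fst p) * (d (fst p) (snd p))\<^sup>2"
        unfolding g_def by (simp add: power2_eq_square indicator_def)
      have fgeq: "\<And>p. f p * g p = indicator (I i) (fst p) * d (fst p) (snd p) * (xi (Suc i) (snd p) - xi i (snd p))"
        unfolding f_def g_def by (simp add: indicator_def)
      have IT: "I i \<subseteq> {0..T}" using ttpos[of i] ttT[of "Suc i"] i by (auto simp: I_def)
      have f2: "integrable N (\<lambda>p. (f p)\<^sup>2)" unfolding f2eq by (rule prod_sep(1)[OF D2 Ib IT])
      have g2: "integrable N (\<lambda>p. (g p)\<^sup>2)" unfolding g_def by (rule indA_u_sq_int[OF d Ib])
      have fg: "integrable N (\<lambda>p. f p * g p)" unfolding fgeq
        using N_fub(1)[OF d Dm D2 Ib] .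
      have "\<bar>Ei i\<bar> = \<bar>\<integral>p. f p * g p \<partial>N\<bar>" unfolding Ei_def fgeq ..
      also have "\<dots> \<le> (e * (\<integral>p. (f p)\<^sup>2 \<partial>N) + (\<integral>p. (g p)\<^sup>2 \<partial>N) / e) / 2"
        by (rule amgm_int[OF f2 g2 fg e])
      also have "(\<integral>p. (f p)\<^sup>2 \<partial>N) = (t / K) * (\<integral>\<omega>. (xi (Suc i) \<omega> - xi i \<omega>)\<^sup>2 \<partial>M)"
      proof -
        have "(\<integral>p. (f p)\<^sup>2 \<partial>N) = (\<integral>p. indicator (I i) (fst p) * (xi (Suc i) (snd p) - xi i (snd p))\<^sup>2 \<partial>N)"
          by (simp only: f2eq)
        also have "\<dots> = measure lborel (I i) * (\<integral>\<omega>. (xi (Suc i) \<omega> - xi i \<omega>)\<^sup>2 \<partial>M)"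
          by (rule prod_sep(2)[OF D2 Ib IT])
        also have "measure lborel (I i) = t / K"
          unfolding I_def using ttmono[of i] ttstep[of i] by simp
        finally show ?thesis .
      qed
      also have "(\<integral>p. (g p)\<^sup>2 \<partial>N) = (\<integral>p. indicator (I i) (fst p) * (d (fst p) (snd p))\<^sup>2 \<partial>N)"
        unfolding g2eq ..
      finally show ?thesis .
    qed
    have dsum: "(\<Sum>i<K. (\<integral>p. indicator (I i) (fst p) * (d (fst p) (snd p))\<^sup>2 \<partial>N)) \<le> (\<integral>p. (d (fst p) (snd p))\<^sup>2 \<partial>N)"
    proof -
      have ii: "integrable N (\<lambda>p. indicator (I i) (fst p) * (d (fst p) (snd p))\<^sup>2)" for i
      proof -
        have "(\<lambda>p. indicator (I i) (fst p) * (d (fst p) (snd p))\<^sup>2) = (\<lambda>p. (indicator (I i) (fst p) * d (fst p) (snd p))\<^sup>2)"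
          by (rule ext) (simp add: power2_eq_square indicator_def)
        then show ?thesis using indA_u_sq_int[OF d Ib] by simp
      qed
      have "(\<Sum>i<K. (\<integral>p. indicator (I i) (fst p) * (d (fst p) (snd p))\<^sup>2 \<partial>N)) =
            (\<integral>p. (\<Sum>i<K. indicator (I i) (fst p)) * (d (fst p) (snd p))\<^sup>2 \<partial>N)"
        by (subst Bochner_Integration.integral_sum[symmetric]) (use ii in \<open>auto simp: sum_distrib_right\<close>)
      also have "\<dots> \<le> (\<integral>p. (d (fst p) (snd p))\<^sup>2 \<partial>N)"
      proof (rule integral_mono)
        have "integrable N (\<lambda>p. \<Sum>i<K. indicator (I i) (fst p) * (d (fst p) (snd p))\<^sup>2)"
          by (rule Bochner_Integration.integrable_sum) (rule ii)
        then show "integrable N (\<lambda>p. (\<Sum>i<K. indicator (I i) (fst p)) * (d (fst p) (snd p))\<^sup>2)"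
          by (simp only: sum_distrib_right)
        show "integrable N (\<lambda>p. (d (fst p) (snd p))\<^sup>2)" using H_sq[OF d] .
        fix p :: "real \<times> 'a"
        have "(\<Sum>i<K. indicator (I i) (fst p) :: real) \<le> 1"
        proof -
          have a: "indicator {0..t} (fst p) \<le> (1::real)" by (simp add: indicator_def)
          have b: "0 \<le> (indicator {0} (fst p) :: real)" by (simp add: indicator_def)
          show ?thesis using P[of "fst p"] a b by linarith
        qed
        then show "(\<Sum>i<K. indicator (I i) (fst p)) * (d (fst p) (snd p))\<^sup>2 \<le> (d (fst p) (snd p))\<^sup>2"
          using mult_right_mono[of _ 1 "(d (fst p) (snd p))\<^sup>2"] by simp
      qed
      finally show ?thesis .
    qed
    have "\<bar>A - H_inner M T d w\<bar> \<le> (\<Sum>i<K. \<bar>Ei i\<bar>)" unfolding AW by (rule sum_abs)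
    also have "\<dots> \<le> (\<Sum>i<K. (e * ((t / K) * (\<integral>\<omega>. (xi (Suc i) \<omega> - xi i \<omega>)\<^sup>2 \<partial>M)) +
        (\<integral>p. indicator (I i) (fst p) * (d (fst p) (snd p))\<^sup>2 \<partial>N) / e) / 2)"
      by (rule sum_mono) (use Ebound in simp)
    also have "\<dots> = (e * (t / K) * (\<Sum>i<K. (\<integral>\<omega>. (xi (Suc i) \<omega> - xi i \<omega>)\<^sup>2 \<partial>M)) +
        (\<Sum>i<K. (\<integral>p. indicator (I i) (fst p) * (d (fst p) (snd p))\<^sup>2 \<partial>N)) / e) / 2"
      by (simp add: sum_divide_distrib sum_distrib_left sum.distrib add_divide_distrib mult.assoc)
    also have "\<dots> \<le> (e * (t / K) * (\<integral>\<omega>. (\<xi> \<omega>)\<^sup>2 \<partial>M) + (\<integral>p. (d (fst p) (snd p))\<^sup>2 \<partial>N) / e) / 2"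
    proof -
      have c: "0 \<le> e * (t / K)" using e t by simp
      have h1: "e * (t / K) * (\<Sum>i<K. (\<integral>\<omega>. (xi (Suc i) \<omega> - xi i \<omega>)\<^sup>2 \<partial>M)) \<le> e * (t / K) * (\<integral>\<omega>. (\<xi> \<omega>)\<^sup>2 \<partial>M)"
        by (rule mult_left_mono[OF tel c])
      have h2: "(\<Sum>i<K. (\<integral>p. indicator (I i) (fst p) * (d (fst p) (snd p))\<^sup>2 \<partial>N)) / e \<le> (\<integral>p. (d (fst p) (snd p))\<^sup>2 \<partial>N) / e"
        using dsum e by (simp add: divide_right_mono)
      show ?thesis by (rule divide_right_mono[OF add_mono[OF h1 h2]]) simp
    qed
    finally show "\<bar>(\<integral>p. indicator {0..t} (fst p) * d (fst p) (snd p) * \<xi> (snd p) \<partial>N) - H_inner M T d w\<bar>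
      \<le> (e * (t / K) * (\<integral>\<omega>. (\<xi> \<omega>)\<^sup>2 \<partial>M) + (\<integral>p. (d (fst p) (snd p))\<^sup>2 \<partial>N) / e) / 2"
      unfolding A_def .
  qed
qed

end

context ctrl begin

lemma K_lim:
  fixes \<xi> :: "'a \<Rightarrow> real" and d :: "nat \<Rightarrow> real \<Rightarrow> 'a \<Rightarrow> real"
  assumes dH: "\<And>n. d n \<in> HH" and dw: "\<And>w. w \<in> HH \<Longrightarrow> (\<lambda>n. H_inner M T (d n) w) \<longlonglongrightarrow> 0"
    and dB: "\<And>n. (\<integral>p. (d n (fst p) (snd p))\<^sup>2 \<partial>N) \<le> B"
    and xi: "\<xi> \<in> borel_measurable M" "integrable M (\<lambda>\<omega>. (\<xi> \<omega>)\<^sup>2)"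
    and t: "t \<in> {0..T}"
  shows "(\<lambda>n. \<integral>p. indicator {0..t} (fst p) * d n (fst p) (snd p) * \<xi> (snd p) \<partial>N) \<longlonglongrightarrow> 0"
proof (rule LIMSEQ_I)
  fix r :: real assume r: "0 < r"
  define X where "X = (\<integral>\<omega>. (\<xi> \<omega>)\<^sup>2 \<partial>M)"
  have X0: "0 \<le> X" unfolding X_def by simp
  define Bp where "Bp = \<bar>B\<bar> + 1"
  have Bp: "0 < Bp" unfolding Bp_def by simp
  define e where "e = 4 * Bp / r"
  have e: "0 < e" unfolding e_def using Bp r by simp
  define K where "K = nat \<lceil>4 * e * t * X / r\<rceil> + 1"
  have K: "0 < K" unfolding K_def by simp
  have t0: "0 \<le> t" using t by simp
  have KK: "4 * e * t * X / r \<le> real K" unfolding K_def by linarith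
  have b1: "e * (t / K) * X \<le> r / 4"
  proof -
    have "4 * e * t * X \<le> r * real K" using KK r by (simp add: field_simps)
    then have "e * t * X \<le> r / 4 * real K" by simp
    then show ?thesis using K by (simp add: field_simps)
  qed
  obtain w where wH: "w \<in> HH" and wb: "\<And>d'. d' \<in> HH \<Longrightarrow>
    \<bar>(\<integral>p. indicator {0..t} (fst p) * d' (fst p) (snd p) * \<xi> (snd p) \<partial>N) - H_inner M T d' w\<bar>
      \<le> (e * (t / K) * X + (\<integral>p. (d' (fst p) (snd p))\<^sup>2 \<partial>N) / e) / 2"
    using K_approx[OF xi t K e] unfolding X_def by blast
  obtain no where no: "\<And>n. n \<ge> no \<Longrightarrow> norm (H_inner M T (d n) w - 0) < r / 2"
    using LIMSEQ_D[OF dw[OF wH], of "r / 2"] r by auto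
  show "\<exists>no. \<forall>n\<ge>no. norm ((\<integral>p. indicator {0..t} (fst p) * d n (fst p) (snd p) * \<xi> (snd p) \<partial>N) - 0) < r"
  proof (intro exI allI impI)
    fix n assume n: "no \<le> n"
    have b2: "(\<integral>p. (d n (fst p) (snd p))\<^sup>2 \<partial>N) / e \<le> r / 4"
    proof -
      have "(\<integral>p. (d n (fst p) (snd p))\<^sup>2 \<partial>N) \<le> Bp" using dB[of n] unfolding Bp_def by linarith
      then have "(\<integral>p. (d n (fst p) (snd p))\<^sup>2 \<partial>N) / e \<le> Bp / e" using e by (simp add: divide_right_mono)
      also have "Bp / e = r / 4" unfolding e_def using Bp r by simp
      finally show ?thesis .
    qed
    have "\<bar>(\<integral>p. indicator {0..t} (fst p) * d n (fst p) (snd p) * \<xi> (snd p) \<partial>N) - H_inner M T (d n) w\<bar> \<le> r / 4"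
    proof -
      have "(e * (t / K) * X + (\<integral>p. (d n (fst p) (snd p))\<^sup>2 \<partial>N) / e) / 2 \<le> (r / 4 + r / 4) / 2"
        by (rule divide_right_mono[OF add_mono[OF b1 b2]]) simp
      from order.trans[OF wb[OF dH[of n]] this] show ?thesis by simp
    qed
    moreover have "\<bar>H_inner M T (d n) w\<bar> < r / 2" using no[OF n] by simp
    ultimately show "norm ((\<integral>p. indicator {0..t} (fst p) * d n (fst p) (snd p) * \<xi> (snd p) \<partial>N) - 0) < r"
      using r unfolding diff_0_right real_norm_def by linarith
  qed
qed

lemma K_lim_E:
  fixes \<xi> :: "'a \<Rightarrow> real" and d :: "nat \<Rightarrow> real \<Rightarrow> 'a \<Rightarrow> real"
  assumes dH: "\<And>n. d n \<in> HH" and dw: "\<And>w. w \<in> HH \<Longrightarrow> (\<lambda>n. H_inner M T (d n) w) \<longlonglongrightarrow> 0"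
    and dB: "\<And>n. (\<integral>p. (d n (fst p) (snd p))\<^sup>2 \<partial>N) \<le> B"
    and xi: "\<xi> \<in> borel_measurable M" "integrable M (\<lambda>\<omega>. (\<xi> \<omega>)\<^sup>2)"
    and t: "t \<in> {0..T}"
  shows "(\<lambda>n. \<integral>\<omega>. \<xi> \<omega> * Zint t (d n) \<omega> \<partial>M) \<longlonglongrightarrow> 0"
proof -
  have "\<And>n. (\<integral>\<omega>. \<xi> \<omega> * Zint t (d n) \<omega> \<partial>M) =
     (\<integral>p. indicator {0..t} (fst p) * d n (fst p) (snd p) * \<xi> (snd p) \<partial>N)"
    using FubY(2)[OF dH xi] N_fub(2)[OF dH xi] by simp
  then show ?thesis using K_lim[OF dH dw dB xi t] by simp
qed

end

lemma cs_partial: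
  fixes c a :: "nat \<Rightarrow> real"
  assumes "\<And>k. 0 \<le> c k"
  shows "(\<Sum>k<m. c k * \<bar>a k\<bar>)\<^sup>2 \<le> (\<Sum>k<m. c k) * (\<Sum>k<m. c k * (a k)\<^sup>2)"
proof -
  have "(\<Sum>k<m. sqrt (c k) * (sqrt (c k) * \<bar>a k\<bar>))\<^sup>2 \<le> (\<Sum>k<m. (sqrt (c k))\<^sup>2) * (\<Sum>k<m. (sqrt (c k) * \<bar>a k\<bar>)\<^sup>2)"
    by (rule Cauchy_Schwarz_ineq_sum)
  moreover have "\<And>k. sqrt (c k) * (sqrt (c k) * \<bar>a k\<bar>) = c k * \<bar>a k\<bar>"
    using assms by (simp add: mult.assoc[symmetric])
  moreover have "\<And>k. (sqrt (c k))\<^sup>2 = c k" using assms by simp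
  moreover have "\<And>k. (sqrt (c k) * \<bar>a k\<bar>)\<^sup>2 = c k * (a k)\<^sup>2"
    using assms by (simp add: power_mult_distrib)
  ultimately show ?thesis by simp
qed

context ctrl begin

definition nrm :: "(real \<Rightarrow> 'a \<Rightarrow> real) \<Rightarrow> real" where
  "nrm u = (\<integral>p. (u (fst p) (snd p))\<^sup>2 \<partial>N)"

lemma nrm_nonneg: "0 \<le> nrm u" unfolding nrm_def by simp

lemma ip_self: "H_inner M T u u = nrm u"
  unfolding ip_eq nrm_def by (simp add: power2_eq_square)

lemma CS_H:
  assumes v: "v \<in> HH" and w: "w \<in> HH" and nw: "nrm w \<le> 1" and nv: "0 < nrm v"
  shows "\<bar>H_inner M T v w\<bar> \<le> sqrt (nrm v)"
proof -
  define e where "e = 1 / sqrt (nrm v)"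
  have e: "0 < e" unfolding e_def using nv by simp
  have "\<bar>H_inner M T v w\<bar> \<le> (e * nrm v + nrm w / e) / 2"
    unfolding ip_eq nrm_def by (rule amgm_int[OF H_sq[OF v] H_sq[OF w] H_prod_int[OF v w] e])
  also have "\<dots> \<le> (e * nrm v + 1 / e) / 2"
    using nw e by (simp add: divide_right_mono)
  also have "\<dots> = sqrt (nrm v)"
    unfolding e_def using nv by (simp add: field_simps)
  finally show ?thesis .
qed

lemma SER:
  fixes u :: "nat \<Rightarrow> real \<Rightarrow> 'a \<Rightarrow> real" and c :: "nat \<Rightarrow> real"
  assumes uH: "\<And>k. u k \<in> HH" and un: "\<And>k. nrm (u k) \<le> 1"
    and c0: "\<And>k. 0 \<le> c k" and cs: "summable c"
  shows "(\<lambda>s \<omega>. \<Sum>k. c k * u k s \<omega>) \<in> HH"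
    "\<And>v. v \<in> HH \<Longrightarrow> (\<lambda>k. c k * H_inner M T v (u k)) sums H_inner M T v (\<lambda>s \<omega>. \<Sum>k. c k * u k s \<omega>)"
proof -
  define W where "W = (\<lambda>s \<omega>. \<Sum>k. c k * u k s \<omega>)"
  define f where "f k p = c k * (u k (fst p) (snd p))\<^sup>2" for k p
  have um: "\<And>k. (\<lambda>p. u k (fst p) (snd p)) \<in> borel_measurable N" using H_meas[OF uH] .
  have fm: "\<And>k. f k \<in> borel_measurable N" unfolding f_def using um by measurable
  have fi: "\<And>k. integrable N (f k)" unfolding f_def using H_sq[OF uH] by simp
  have f0: "\<And>k p. 0 \<le> f k p" unfolding f_def using c0 by simp
  have intf: "\<And>k. (\<integral>p. f k p \<partial>N) \<le> c k"
    unfolding f_def using un c0 unfolding nrm_def by (simp add: mult_left_le)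
  have sumint: "summable (\<lambda>k. \<integral>p. f k p \<partial>N)"
    by (rule summable_comparison_test[OF _ cs]) (use intf f0 in \<open>auto intro!: exI[of _ 0]\<close>)
  have AEs: "AE p in N. summable (\<lambda>k. f k p)"
  proof -
    have "(\<integral>\<^sup>+p. (\<Sum>k. ennreal (f k p)) \<partial>N) = (\<Sum>k. \<integral>\<^sup>+p. ennreal (f k p) \<partial>N)"
      by (rule nn_integral_suminf) (use fm in auto)
    also have "\<dots> = (\<Sum>k. ennreal (\<integral>p. f k p \<partial>N))"
      by (intro arg_cong[where f=suminf] ext nn_integral_eq_integral fi) (use f0 in auto)
    also have "\<dots> \<noteq> \<infinity>"
      using sumint by (simp add: suminf_nonneg ennreal_suminf_neq_top integral_nonneg_AE f0)
    finally have "AE p in N. (\<Sum>k. ennreal (f k p)) \<noteq> \<infinity>"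
      by (intro nn_integral_PInf_AE) (use fm in auto)
    then show ?thesis
      by eventually_elim (rule summable_suminf_not_top[OF f0], simp)
  qed
  define h where "h p = (\<Sum>k. f k p)" for p
  have hi: "integrable N h"
    unfolding h_def by (rule integrable_suminf[OF fi]) (use AEs f0 sumint in auto)
  define Cc where "Cc = (\<Sum>k. c k)"
  have good: "summable (\<lambda>k. c k * \<bar>u k s \<omega>\<bar>) \<and> (W s \<omega>)\<^sup>2 \<le> Cc * h (s, \<omega>)"
    if sf: "summable (\<lambda>k. f k (s, \<omega>))" for s \<omega>
  proof -
    have b: "c k * \<bar>u k s \<omega>\<bar> \<le> (c k + f k (s, \<omega>)) / 2" for k
    proof -
      have "0 \<le> c k * (\<bar>u k s \<omega>\<bar> - 1)\<^sup>2" using c0 by simp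
      then show ?thesis unfolding f_def by (simp add: power2_eq_square algebra_simps)
    qed
    have sa: "summable (\<lambda>k. c k * \<bar>u k s \<omega>\<bar>)"
      by (rule summable_comparison_test[of _ "\<lambda>k. (c k + f k (s, \<omega>)) / 2"])
         (use b c0 cs sf in \<open>auto intro!: summable_divide summable_add\<close>)
    have "\<bar>W s \<omega>\<bar> \<le> (\<Sum>k. \<bar>c k * u k s \<omega>\<bar>)"
      unfolding W_def by (rule summable_rabs) (use sa c0 in \<open>simp add: abs_mult\<close>)
    also have "\<dots> = (\<Sum>k. c k * \<bar>u k s \<omega>\<bar>)" using c0 by (simp add: abs_mult)
    finally have Wle: "\<bar>W s \<omega>\<bar> \<le> (\<Sum>k. c k * \<bar>u k s \<omega>\<bar>)" .
    have "(\<Sum>k. c k * \<bar>u k s \<omega>\<bar>)\<^sup>2 \<le> Cc * h (s, \<omega>)"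
    proof (rule LIMSEQ_le_const2)
      show "(\<lambda>m. (\<Sum>k<m. c k * \<bar>u k s \<omega>\<bar>)\<^sup>2) \<longlonglongrightarrow> (\<Sum>k. c k * \<bar>u k s \<omega>\<bar>)\<^sup>2"
        by (intro tendsto_power summable_LIMSEQ sa)
      show "\<exists>K0. \<forall>m\<ge>K0. (\<Sum>k<m. c k * \<bar>u k s \<omega>\<bar>)\<^sup>2 \<le> Cc * h (s, \<omega>)"
      proof (intro exI allI impI)
        fix m :: nat
        have "(\<Sum>k<m. c k * \<bar>u k s \<omega>\<bar>)\<^sup>2 \<le> (\<Sum>k<m. c k) * (\<Sum>k<m. c k * (u k s \<omega>)\<^sup>2)"
          by (rule cs_partial[OF c0])
        also have "\<dots> \<le> Cc * h (s, \<omega>)"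
        proof (rule mult_mono)
          show "(\<Sum>k<m. c k) \<le> Cc" unfolding Cc_def by (rule sum_le_suminf[OF cs]) (use c0 in auto)
          show "(\<Sum>k<m. c k * (u k s \<omega>)\<^sup>2) \<le> h (s, \<omega>)"
            unfolding h_def using sum_le_suminf[OF sf, of "{..<m}"] f0 unfolding f_def by auto
          show "0 \<le> Cc" unfolding Cc_def by (rule suminf_nonneg[OF cs c0])
          show "0 \<le> (\<Sum>k<m. c k * (u k s \<omega>)\<^sup>2)" using c0 by (simp add: sum_nonneg)
        qed
        finally show "(\<Sum>k<m. c k * \<bar>u k s \<omega>\<bar>)\<^sup>2 \<le> Cc * h (s, \<omega>)" .
      qed
    qed
    moreover have "(W s \<omega>)\<^sup>2 \<le> (\<Sum>k. c k * \<bar>u k s \<omega>\<bar>)\<^sup>2"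
      using Wle by (metis abs_ge_zero abs_le_square_iff abs_of_nonneg order_trans power2_abs)
    ultimately show ?thesis using sa by linarith
  qed
  have Wm: "(\<lambda>p. W (fst p) (snd p)) \<in> borel_measurable N" unfolding W_def using um by measurable
  have W2: "integrable N (\<lambda>p. (W (fst p) (snd p))\<^sup>2)"
  proof (rule Bochner_Integration.integrable_bound)
    show "integrable N (\<lambda>p. Cc * h p)" using hi by simp
    show "(\<lambda>p. (W (fst p) (snd p))\<^sup>2) \<in> borel_measurable N" using Wm by simp
    show "AE p in N. norm ((W (fst p) (snd p))\<^sup>2) \<le> norm (Cc * h p)"
      using AEs
    proof eventually_elim
      case (elim p)
      then have "(W (fst p) (snd p))\<^sup>2 \<le> Cc * h (fst p, snd p)" using good[of "fst p" "snd p"] by simp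
      then show ?case by simp
    qed
  qed
  show WH: "(\<lambda>s \<omega>. \<Sum>k. c k * u k s \<omega>) \<in> HH"
    unfolding W_def[symmetric]
  proof (rule HI[OF Wm _ W2])
    fix s assume "s \<in> {0..T}"
    then have "\<And>k. u k s \<in> borel_measurable (G s)" using H_ad[OF uH] by blast
    then show "W s \<in> borel_measurable (G s)" unfolding W_def by measurable
  qed
  fix v assume v: "v \<in> HH"
  define g where "g k p = c k * (v (fst p) (snd p) * u k (fst p) (snd p))" for k p
  have gi: "\<And>k. integrable N (g k)" unfolding g_def using H_prod_int[OF v uH] by simp
  have gs: "AE p in N. summable (\<lambda>k. norm (g k p))"
    using AEs
  proof eventually_elim
    case (elim p)
    then have "summable (\<lambda>k. c k * \<bar>u k (fst p) (snd p)\<bar>)" using good[of "fst p" "snd p"] by simp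
    then have "summable (\<lambda>k. \<bar>v (fst p) (snd p)\<bar> * (c k * \<bar>u k (fst p) (snd p)\<bar>))"
      by (rule summable_mult)
    then show ?case unfolding g_def using c0 by (simp add: abs_mult mult.assoc mult.left_commute)
  qed
  have gint: "summable (\<lambda>k. \<integral>p. norm (g k p) \<partial>N)"
  proof (rule summable_comparison_test[of _ "\<lambda>k. c k * ((nrm v + 1) / 2)"])
    show "summable (\<lambda>k. c k * ((nrm v + 1) / 2))" using cs by (rule summable_mult2)
    show "\<exists>K0. \<forall>k\<ge>K0. norm (\<integral>p. norm (g k p) \<partial>N) \<le> c k * ((nrm v + 1) / 2)"
    proof (intro exI allI impI)
      fix k :: nat
      have "(\<integral>p. \<bar>v (fst p) (snd p) * u k (fst p) (snd p)\<bar> \<partial>N) \<le>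
            (\<integral>p. ((v (fst p) (snd p))\<^sup>2 + (u k (fst p) (snd p))\<^sup>2) / 2 \<partial>N)"
      proof (rule integral_mono)
        show "integrable N (\<lambda>p. \<bar>v (fst p) (snd p) * u k (fst p) (snd p)\<bar>)" using H_prod_int[OF v uH] by simp
        show "integrable N (\<lambda>p. ((v (fst p) (snd p))\<^sup>2 + (u k (fst p) (snd p))\<^sup>2) / 2)"
          using H_sq[OF v] H_sq[OF uH] by simp
        fix p
        have "0 \<le> (\<bar>v (fst p) (snd p)\<bar> - \<bar>u k (fst p) (snd p)\<bar>)\<^sup>2" by simp
        then show "\<bar>v (fst p) (snd p) * u k (fst p) (snd p)\<bar> \<le> ((v (fst p) (snd p))\<^sup>2 + (u k (fst p) (snd p))\<^sup>2) / 2"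
          by (simp add: power2_eq_square abs_mult algebra_simps)
      qed
      also have "\<dots> = (nrm v + nrm (u k)) / 2"
        unfolding nrm_def using H_sq[OF v] H_sq[OF uH] by simp
      also have "\<dots> \<le> (nrm v + 1) / 2" using un[of k] by simp
      finally have "(\<integral>p. \<bar>v (fst p) (snd p) * u k (fst p) (snd p)\<bar> \<partial>N) \<le> (nrm v + 1) / 2" .
      note bnd = this
      have eq: "(\<integral>p. norm (g k p) \<partial>N) = c k * (\<integral>p. \<bar>v (fst p) (snd p) * u k (fst p) (snd p)\<bar> \<partial>N)"
        unfolding g_def using c0[of k] by (simp add: abs_mult)
      have "norm (\<integral>p. norm (g k p) \<partial>N) = c k * (\<integral>p. \<bar>v (fst p) (snd p) * u k (fst p) (snd p)\<bar> \<partial>N)"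
        unfolding eq using c0[of k] by simp
      then show "norm (\<integral>p. norm (g k p) \<partial>N) \<le> c k * ((nrm v + 1) / 2)"
        by (simp only:) (rule mult_left_mono[OF bnd c0])
    qed
  qed
  have "(\<lambda>k. \<integral>p. g k p \<partial>N) sums (\<integral>p. (\<Sum>k. g k p) \<partial>N)"
    by (rule sums_integral[OF gi gs gint])
  moreover have "\<And>k. (\<integral>p. g k p \<partial>N) = c k * H_inner M T v (u k)"
    unfolding g_def ip_eq by simp
  moreover have "(\<integral>p. (\<Sum>k. g k p) \<partial>N) = H_inner M T v W"
  proof -
    have "(\<integral>p. (\<Sum>k. g k p) \<partial>N) = (\<integral>p. v (fst p) (snd p) * W (fst p) (snd p) \<partial>N)"
    proof (rule integral_cong_AE)
      show "(\<lambda>p. \<Sum>k. g k p) \<in> borel_measurable N" using gi by measurable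
      show "(\<lambda>p. v (fst p) (snd p) * W (fst p) (snd p)) \<in> borel_measurable N"
        using H_meas[OF v] Wm by simp
      show "AE p in N. (\<Sum>k. g k p) = v (fst p) (snd p) * W (fst p) (snd p)"
        using AEs
      proof eventually_elim
        case (elim p)
        then have "summable (\<lambda>k. c k * \<bar>u k (fst p) (snd p)\<bar>)" using good[of "fst p" "snd p"] by simp
        then have "summable (\<lambda>k. \<bar>c k * u k (fst p) (snd p)\<bar>)" using c0 by (simp add: abs_mult)
        then have "summable (\<lambda>k. c k * u k (fst p) (snd p))" by (rule summable_rabs_cancel)
        then show ?case unfolding g_def W_def
          by (simp add: suminf_mult[symmetric] mult.left_commute)
      qed
    qed
    then show ?thesis unfolding ip_eq .
  qed
  ultimately show "(\<lambda>k. c k * H_inner M T v (u k)) sums H_inner M T v (\<lambda>s \<omega>. \<Sum>k. c k * u k s \<omega>)"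
    unfolding W_def by simp
qed

end

lemma hump_est:
  fixes a S :: "nat \<Rightarrow> real" and D :: real
  assumes sa: "summable a" and aj: "a j = (1/4)^j * D"
    and aS: "\<And>k. \<bar>a k\<bar> \<le> (1/4)^k * S k" and aD: "\<And>k. \<bar>a k\<bar> \<le> (1/4)^k * D" and D: "0 \<le> D"
  shows "(2/3) * (1/4)^j * D - (\<Sum>k<j. (1/4)^k * S k) \<le> \<bar>suminf a\<bar>"
proof -
  have split: "suminf a = (\<Sum>i. a (i + Suc j)) + (\<Sum>k<j. a k) + a j"
    using suminf_split_initial_segment[OF sa, of "Suc j"] by simp
  have h1: "\<bar>\<Sum>k<j. a k\<bar> \<le> (\<Sum>k<j. (1/4)^k * S k)"
    by (rule order.trans[OF sum_abs sum_mono]) (use aS in auto)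
  have g: "summable (\<lambda>i. (1/4::real)^(i + Suc j) * D)"
    by (simp add: power_add summable_mult2)
  have g_eq: "(\<Sum>i. (1/4::real)^(i + Suc j) * D) = (1/4)^j * D / 3"
  proof -
    have e: "\<And>i. (1/4::real)^(i + Suc j) * D = (1/4::real)^i * ((1/4)^(Suc j) * D)"
      by (simp only: power_add mult.assoc)
    have gs: "summable (\<lambda>i. (1/4::real)^i)" by (rule summable_geometric) simp
    have "(\<Sum>i. (1/4::real)^(i + Suc j) * D) = (\<Sum>i. (1/4::real)^i * ((1/4)^(Suc j) * D))"
      by (simp only: e)
    also have "\<dots> = (\<Sum>i. (1/4::real)^i) * ((1/4)^(Suc j) * D)"
      by (rule suminf_mult2[OF gs, symmetric])
    finally have "(\<Sum>i. (1/4::real)^(i + Suc j) * D) = (\<Sum>i. (1/4::real)^i) * ((1/4)^(Suc j) * D)" .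
    also have "(\<Sum>i. (1/4::real)^i) = 4/3" by (subst suminf_geometric) auto
    finally show ?thesis by simp
  qed
  have sabs: "summable (\<lambda>i. \<bar>a (i + Suc j)\<bar>)"
    by (rule summable_comparison_test[OF _ g], rule exI[of _ 0], intro allI impI,
        simp only: real_norm_def abs_idempotent, rule aD)
  have h2: "\<bar>\<Sum>i. a (i + Suc j)\<bar> \<le> (1/4)^j * D / 3"
  proof -
    have "\<bar>\<Sum>i. a (i + Suc j)\<bar> \<le> (\<Sum>i. \<bar>a (i + Suc j)\<bar>)" by (rule summable_rabs[OF sabs])
    also have "\<dots> \<le> (\<Sum>i. (1/4::real)^(i + Suc j) * D)"
      by (rule suminf_le[OF _ sabs g]) (rule aD)
    finally show ?thesis using g_eq by simp
  qed
  show ?thesis unfolding split aj using h1 h2 by linarith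
qed

context ctrl begin

lemma nrm_scale: "nrm (\<lambda>s \<omega>. r * u s \<omega>) = r\<^sup>2 * nrm u"
  unfolding nrm_def by (simp add: power_mult_distrib)

lemma ip_scale2: "H_inner M T v (\<lambda>s \<omega>. r * u s \<omega>) = r * H_inner M T v u"
  unfolding ip_eq by (simp add: mult.left_commute)

lemma weak_bdd:
  fixes d :: "nat \<Rightarrow> real \<Rightarrow> 'a \<Rightarrow> real"
  assumes dH: "\<And>n. d n \<in> HH" and dw: "\<And>w. w \<in> HH \<Longrightarrow> (\<lambda>n. H_inner M T (d n) w) \<longlonglongrightarrow> 0"
  shows "\<exists>B. \<forall>n. nrm (d n) \<le> B"
proof (rule ccontr)
  assume "\<not> (\<exists>B. \<forall>n. nrm (d n) \<le> B)"
  then have unb: "\<And>B. \<exists>n. B < nrm (d n)" by (meson not_le)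
  have bnd: "\<exists>S. \<forall>n. \<bar>H_inner M T (d n) w\<bar> \<le> S" if "w \<in> HH" for w
  proof -
    have "Bseq (\<lambda>n. H_inner M T (d n) w)" using dw[OF that] by (intro convergent_imp_Bseq convergentI)
    then show ?thesis unfolding Bseq_def by auto
  qed
  define Sb where "Sb w = (SOME S. \<forall>n. \<bar>H_inner M T (d n) w\<bar> \<le> S)" for w
  have Sb: "\<And>n. \<bar>H_inner M T (d n) w\<bar> \<le> Sb w" if "w \<in> HH" for w
    unfolding Sb_def using someI_ex[OF bnd[OF that]] by blast
  define c where "c k = (1/4::real)^k" for k
  define ud where "ud n = (\<lambda>s \<omega>. inverse (sqrt (nrm (d n))) * d n s \<omega>)" for n
  have udH: "\<And>n. ud n \<in> HH" unfolding ud_def by (rule H_scale[OF dH])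
  have udn: "nrm (ud n) \<le> 1" for n
  proof (cases "nrm (d n) = 0")
    case True then show ?thesis unfolding ud_def nrm_scale by simp
  next
    case False then show ?thesis unfolding ud_def nrm_scale using nrm_nonneg[of "d n"]
      by (simp add: power_inverse)
  qed
  have udip: "H_inner M T (d n) (ud n) = sqrt (nrm (d n))" if "0 < nrm (d n)" for n
    unfolding ud_def ip_scale2 ip_self using that by (simp add: field_simps)
  define pick where "pick j R = (SOME n. (3/2) * 4^j * (R + real j) < sqrt (nrm (d n)) \<and> 0 < nrm (d n))" for j R
  have pick: "(3/2) * 4^j * (R + real j) < sqrt (nrm (d (pick j R))) \<and> 0 < nrm (d (pick j R))" for j R
  proof -
    define X where "X = (3/2) * 4^j * (R + real j)"
    obtain n where n: "max 0 (X\<^sup>2) < nrm (d n)" using unb by blast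
    have "0 < nrm (d n)" using n zero_le_power2[of X] by linarith
    moreover have "X < sqrt (nrm (d n))"
    proof -
      have "\<bar>X\<bar> = sqrt (X\<^sup>2)" by simp
      also have "\<dots> < sqrt (nrm (d n))" using n by (simp del: real_sqrt_abs)
      finally show ?thesis by simp
    qed
    ultimately have "\<exists>n. X < sqrt (nrm (d n)) \<and> 0 < nrm (d n)" by blast
    then show ?thesis unfolding pick_def X_def by (rule someI_ex)
  qed
  define Rs where "Rs = rec_nat 0 (\<lambda>j R. R + c j * Sb (ud (pick j R)))"
  define nn where "nn j = pick j (Rs j)" for j
  define u where "u j = ud (nn j)" for j
  have Rs_eq: "Rs j = (\<Sum>k<j. c k * Sb (u k))" for j
    by (induction j) (simp_all add: Rs_def u_def nn_def)
  have uH: "\<And>k. u k \<in> HH" unfolding u_def by (rule udH)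
  have un: "\<And>k. nrm (u k) \<le> 1" unfolding u_def by (rule udn)
  have c0: "\<And>k. 0 \<le> c k" unfolding c_def by simp
  have cs: "summable c" unfolding c_def by (rule summable_geometric) simp
  define W where "W = (\<lambda>s \<omega>. \<Sum>k. c k * u k s \<omega>)"
  have WH: "W \<in> HH" unfolding W_def by (rule SER(1)[OF uH un c0 cs])
  have Wsum: "\<And>v. v \<in> HH \<Longrightarrow> (\<lambda>k. c k * H_inner M T v (u k)) sums H_inner M T v W"
    unfolding W_def by (rule SER(2)[OF uH un c0 cs])
  have big: "real j < \<bar>H_inner M T (d (nn j)) W\<bar>" for j
  proof -
    define D where "D = sqrt (nrm (d (nn j)))"
    have pj: "(3/2) * 4^j * (Rs j + real j) < D" "0 < nrm (d (nn j))"
      using pick[of j "Rs j"] unfolding D_def nn_def by auto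
    have D0: "0 \<le> D" unfolding D_def by (simp add: nrm_nonneg)
    define a where "a k = c k * H_inner M T (d (nn j)) (u k)" for k
    have sa: "a sums H_inner M T (d (nn j)) W" unfolding a_def by (rule Wsum[OF dH])
    have aj: "a j = (1/4)^j * D"
      unfolding a_def c_def D_def u_def using udip[OF pj(2)] by simp
    have aS: "\<bar>a k\<bar> \<le> (1/4)^k * Sb (u k)" for k
      unfolding a_def c_def using Sb[OF uH[of k], of "nn j"] by (simp add: abs_mult mult_left_mono)
    have aD: "\<bar>a k\<bar> \<le> (1/4)^k * D" for k
      unfolding a_def c_def D_def using CS_H[OF dH uH un pj(2)] by (simp add: abs_mult mult_left_mono)
    have "(2/3) * (1/4)^j * D - (\<Sum>k<j. (1/4)^k * Sb (u k)) \<le> \<bar>suminf a\<bar>"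
      by (rule hump_est[OF sums_summable[OF sa] aj aS aD D0])
    moreover have "(\<Sum>k<j. (1/4)^k * Sb (u k)) = Rs j" unfolding Rs_eq c_def ..
    moreover have "Rs j + real j < (2/3) * (1/4)^j * D"
    proof -
      have h4: "(1/4::real)^j * 4^j = 1" by (simp add: power_mult_distrib[symmetric])
      have alg: "\<And>a b X::real. (2/3) * a * ((3/2) * b * X) = (a * b) * X" by (simp add: algebra_simps)
      have "(2/3) * (1/4::real)^j * ((3/2) * 4^j * (Rs j + real j)) = Rs j + real j"
        unfolding alg h4 by simp
      moreover have "(2/3) * (1/4::real)^j * ((3/2) * 4^j * (Rs j + real j)) < (2/3) * (1/4)^j * D"
        using pj(1) by (intro mult_strict_left_mono) auto
      ultimately show ?thesis by linarith
    qed
    moreover have "suminf a = H_inner M T (d (nn j)) W" using sa by (rule sums_unique[symmetric])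
    ultimately show ?thesis by linarith
  qed
  define j where "j = nat \<lceil>Sb W\<rceil>"
  have "real j < \<bar>H_inner M T (d (nn j)) W\<bar>" by (rule big)
  also have "\<dots> \<le> Sb W" by (rule Sb[OF WH])
  also have "\<dots> \<le> real j" unfolding j_def by linarith
  finally show False by simp
qed

end

lemma grad_ineq2:
  fixes L Lx Lv :: "real \<Rightarrow> real \<Rightarrow> real"
  assumes deriv: "\<And>x v. ((\<lambda>p. L (fst p) (snd p)) has_derivative
                     (\<lambda>h. Lx x v * fst h + Lv x v * snd h)) (at (x, v))"
    and conv: "convex_on UNIV (\<lambda>p. L (fst p) (snd p))"
  shows "L x v + Lx x v * (x' - x) + Lv x v * (v' - v) \<le> L x' v'"
proof -
  define P where "P s = (x + s * (x' - x), v + s * (v' - v))" for s :: real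
  define phi where "phi s = L (fst (P s)) (snd (P s))" for s
  have Pc: "P ((1 - t) *\<^sub>R a + t *\<^sub>R b) = (1 - t) *\<^sub>R P a + t *\<^sub>R P b" for t a b
    unfolding P_def by (simp add: algebra_simps)
  have cphi: "convex_on UNIV phi"
  proof (rule convex_onI)
    fix t a b :: real assume t: "0 < t" "t < 1"
    have "phi ((1 - t) *\<^sub>R a + t *\<^sub>R b) = L (fst ((1 - t) *\<^sub>R P a + t *\<^sub>R P b)) (snd ((1 - t) *\<^sub>R P a + t *\<^sub>R P b))"
      unfolding phi_def Pc ..
    also have "\<dots> \<le> (1 - t) * L (fst (P a)) (snd (P a)) + t * L (fst (P b)) (snd (P b))"
      using convex_onD[OF conv, of t "P a" "P b"] t by simp
    finally show "phi ((1 - t) *\<^sub>R a + t *\<^sub>R b) \<le> (1 - t) * phi a + t * phi b" unfolding phi_def .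
  qed simp
  have dP: "(P has_derivative (\<lambda>h. (h * (x' - x), h * (v' - v)))) (at 0)"
    unfolding P_def by (auto intro!: derivative_eq_intros)
  have "(phi has_derivative (\<lambda>h. Lx x v * (h * (x' - x)) + Lv x v * (h * (v' - v)))) (at 0)"
  proof -
    have P0: "P 0 = (x, v)" unfolding P_def by simp
    show ?thesis
      using has_derivative_compose[OF dP, of "\<lambda>p. L (fst p) (snd p)", unfolded P0, OF deriv[of x v]]
      unfolding phi_def by simp
  qed
  then have "(phi has_field_derivative (Lx x v * (x' - x) + Lv x v * (v' - v))) (at 0)"
    unfolding has_field_derivative_def
    by (rule has_derivative_eq_rhs) (simp add: fun_eq_iff algebra_simps)
  then have "phi 1 - phi 0 \<ge> (Lx x v * (x' - x) + Lv x v * (v' - v)) * (1 - 0)"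
    by (intro convex_on_imp_above_tangent[OF cphi]) auto
  then show ?thesis unfolding phi_def P_def by simp
qed

lemma grad_ineq1:
  fixes Psi Psi' :: "real \<Rightarrow> real"
  assumes deriv: "\<And>x. (Psi has_real_derivative Psi' x) (at x)" and conv: "convex_on UNIV Psi"
  shows "Psi x + Psi' x * (y - x) \<le> Psi y"
  using convex_on_imp_above_tangent[OF conv, of x y "Psi' x"] deriv[of x] by simp

locale prob = ctrl M F T for M :: "'a measure" and F T +
  fixes x0 :: real and varpi :: "real \<Rightarrow> 'a \<Rightarrow> real"
    and L Lx Lv :: "real \<Rightarrow> real \<Rightarrow> real" and Psi Psi' :: "real \<Rightarrow> real"
    and CP CP' Cb CL :: real
  assumes varpi: "varpi \<in> H_F M F T"
    and L_deriv: "\<And>x v. ((\<lambda>p. L (fst p) (snd p)) has_derivative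
                     (\<lambda>h. Lx x v * fst h + Lv x v * snd h)) (at (x, v))"
    and Lx_cont: "continuous_on UNIV (\<lambda>p. Lx (fst p) (snd p))"
    and Lv_cont: "continuous_on UNIV (\<lambda>p. Lv (fst p) (snd p))"
    and L_nonneg: "\<And>x v. L x v \<ge> 0"
    and L_convex: "convex_on UNIV (\<lambda>p. L (fst p) (snd p))"
    and Psi_deriv: "\<And>x. (Psi has_real_derivative Psi' x) (at x)"
    and Psi'_cont: "continuous_on UNIV Psi'"
    and Psi_nonneg: "\<And>x. Psi x \<ge> 0"
    and Psi_convex: "convex_on UNIV Psi"
    and CP_pos: "CP > 0" and CP'_pos: "CP' > 0"
    and Psi_bd: "\<And>x. Psi x \<le> CP * (1 + \<bar>x\<bar>\<^sup>2)"
    and Psi'_bd: "\<And>x. \<bar>Psi' x\<bar> \<le> CP' * (1 + \<bar>x\<bar>)"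
    and Cb_pos: "Cb > 0" and CL_pos: "CL > 0"
    and L_bd: "\<And>x v. L x v \<le> Cb * (1 + \<bar>v\<bar>\<^sup>2)"
    and Lx_bd: "\<And>x v. \<bar>Lx x v\<bar> \<le> CL * (1 + \<bar>v\<bar>)"
    and Lv_bd: "\<And>x v. \<bar>Lv x v\<bar> \<le> CL * (1 + \<bar>v\<bar>)"
begin

lemma L_cont: "continuous_on UNIV (\<lambda>p. L (fst p) (snd p))"
proof (rule has_derivative_continuous_on)
  fix p :: "real \<times> real"
  show "((\<lambda>p. L (fst p) (snd p)) has_derivative (\<lambda>h. Lx (fst p) (snd p) * fst h + Lv (fst p) (snd p) * snd h)) (at p within UNIV)"
    using L_deriv[of "fst p" "snd p"] by simp
qed

lemma Psi_cont: "continuous_on UNIV Psi"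
  using Psi_deriv by (intro continuous_at_imp_continuous_on ballI) (rule DERIV_isCont)

lemma Psi_meas[measurable]: "Psi \<in> borel_measurable borel"
  by (rule borel_measurable_continuous_onI[OF Psi_cont])
lemma Psi'_meas[measurable]: "Psi' \<in> borel_measurable borel"
  by (rule borel_measurable_continuous_onI[OF Psi'_cont])

lemma lin_sq_bound:
  fixes C a :: real
  assumes "\<bar>b\<bar> \<le> C * (1 + \<bar>a\<bar>)" "C > 0"
  shows "b\<^sup>2 \<le> 2 * C\<^sup>2 + 2 * C\<^sup>2 * a\<^sup>2"
proof -
  have "b\<^sup>2 \<le> (C * (1 + \<bar>a\<bar>))\<^sup>2"
    using assms by (metis abs_ge_zero abs_le_square_iff abs_of_nonneg mult_nonneg_nonneg order.trans
        add_nonneg_nonneg zero_le_one less_imp_le)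
  also have "\<dots> = C\<^sup>2 * (1 + \<bar>a\<bar>)\<^sup>2" by (simp add: power_mult_distrib)
  also have "\<dots> \<le> C\<^sup>2 * (2 + 2 * a\<^sup>2)"
  proof (rule mult_left_mono)
    show "(1 + \<bar>a\<bar>)\<^sup>2 \<le> 2 + 2 * a\<^sup>2" using sq_sum_bound[of 1 "\<bar>a\<bar>"] by simp
  qed simp
  finally show ?thesis by (simp add: algebra_simps)
qed

lemma Xm: "v \<in> HH \<Longrightarrow> (\<lambda>p. state x0 v (fst p) (snd p)) \<in> borel_measurable N"
  using state_meas[of v x0] unfolding H_iff by (simp add: split_beta')

lemma XTm: "v \<in> HH \<Longrightarrow> t \<in> {0..T} \<Longrightarrow> state x0 v t \<in> borel_measurable M"
  using sec_meas2[of "state x0 v" t] state_meas[of v x0] unfolding H_iff space_R by blast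

lemma Lm: "v \<in> HH \<Longrightarrow> (\<lambda>p. L (state x0 v (fst p) (snd p)) (v (fst p) (snd p))) \<in> borel_measurable N"
  by (rule borel_measurable_continuous_Pair[OF Xm H_meas L_cont])

lemma Li: assumes v: "v \<in> HH"
  shows "integrable N (\<lambda>p. L (state x0 v (fst p) (snd p)) (v (fst p) (snd p)))"
proof (rule Bochner_Integration.integrable_bound)
  show "integrable N (\<lambda>p. Cb * (1 + (v (fst p) (snd p))\<^sup>2))" using H_sq[OF v] by simp
  show "AE p in N. norm (L (state x0 v (fst p) (snd p)) (v (fst p) (snd p))) \<le> norm (Cb * (1 + (v (fst p) (snd p))\<^sup>2))"
    using L_bd L_nonneg Cb_pos by (intro AE_I2) (simp add: abs_of_nonneg)
qed (rule Lm[OF v])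

lemma Psii: assumes v: "v \<in> HH"
  shows "integrable M (\<lambda>\<omega>. Psi (state x0 v T \<omega>))"
proof (rule Bochner_Integration.integrable_bound)
  show "integrable M (\<lambda>\<omega>. CP * (1 + (state x0 v T \<omega>)\<^sup>2))"
    using state_sq_int_M[OF v, of T] T_pos by simp
  show "(\<lambda>\<omega>. Psi (state x0 v T \<omega>)) \<in> borel_measurable M"
    using XTm[OF v, of T] T_pos by simp
  show "AE \<omega> in M. norm (Psi (state x0 v T \<omega>)) \<le> norm (CP * (1 + (state x0 v T \<omega>)\<^sup>2))"
    using Psi_bd Psi_nonneg CP_pos by (intro AE_I2) (simp add: abs_of_nonneg)
qed

lemma cost_eq:
  assumes v: "v \<in> HH"
  shows "cost_I M T x0 varpi L Psi v =
    (\<integral>p. L (state x0 v (fst p) (snd p)) (v (fst p) (snd p)) + varpi (fst p) (snd p) * v (fst p) (snd p) \<partial>N)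
    + (\<integral>\<omega>. Psi (state x0 v T \<omega>) \<partial>M)"
proof -
  define f where "f t \<omega> = L (state x0 v t \<omega>) (v t \<omega>) + varpi t \<omega> * v t \<omega>" for t \<omega>
  have fi: "integrable N (\<lambda>p. f (fst p) (snd p))"
    unfolding f_def using Li[OF v] H_prod_int[OF varpi v] by simp
  have e1: "(LINT t:{0..T}|lborel. f t \<omega>) = (\<integral>t. f t \<omega> \<partial>R)" for \<omega>
  proof -
    have "(LINT t:{0..T}|lborel. f t \<omega>) = (\<integral>t. indicator {0..T} t * f t \<omega> \<partial>R)" by (rule lint_R) simp
    also have "\<dots> = (\<integral>t. f t \<omega> \<partial>R)"
      by (rule Bochner_Integration.integral_cong[OF refl]) (simp add: space_R)
    finally show ?thesis .
  qed
  have "cost_I M T x0 varpi L Psi v = (\<integral>\<omega>. (\<integral>t. f t \<omega> \<partial>R) + Psi (state x0 v T \<omega>) \<partial>M)"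
    unfolding cost_I_def f_def[symmetric] e1 ..
  also have "\<dots> = (\<integral>\<omega>. (\<integral>t. f t \<omega> \<partial>R) \<partial>M) + (\<integral>\<omega>. Psi (state x0 v T \<omega>) \<partial>M)"
    by (rule Bochner_Integration.integral_add[OF PRM.integrable_snd Psii[OF v]]) (use fi in \<open>simp add: split_beta'\<close>)
  also have "(\<integral>\<omega>. (\<integral>t. f t \<omega> \<partial>R) \<partial>M) = (\<integral>p. f (fst p) (snd p) \<partial>N)"
    using PRM.integral_snd[of f] fi by (simp add: split_beta')
  finally show ?thesis unfolding f_def .
qed

end

context prob begin

lemma sets_R_I: "A \<in> sets borel \<Longrightarrow> A \<subseteq> {0..T} \<Longrightarrow> A \<in> sets R"
  by (simp add: sets_R sets_restrict_space_iff)

lemma state_diff: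
  assumes v: "v \<in> HH" and v': "v' \<in> HH"
  shows "AE \<omega> in M. \<forall>t\<in>{0..T}. state x0 v' t \<omega> - state x0 v t \<omega> = Zint t (\<lambda>s \<omega>. v' s \<omega> - v s \<omega>) \<omega>"
  using H_AE_sec[OF v] H_AE_sec[OF v']
proof (rule AE_mp[OF AE_conjI[OF _ _] AE_I2[OF impI]])
  fix \<omega> assume \<omega>: "\<omega> \<in> space M" and i: "integrable R (\<lambda>s. (v s \<omega>)\<^sup>2) \<and> integrable R (\<lambda>s. (v' s \<omega>)\<^sup>2)"
  have iv: "integrable R (\<lambda>s. v s \<omega>)" using sec_int[of v \<omega>] H_meas[OF v] \<omega> i by (simp add: split_beta')
  have iv': "integrable R (\<lambda>s. v' s \<omega>)" using sec_int[of v' \<omega>] H_meas[OF v'] \<omega> i by (simp add: split_beta')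
  show "\<forall>t\<in>{0..T}. state x0 v' t \<omega> - state x0 v t \<omega> = Zint t (\<lambda>s \<omega>. v' s \<omega> - v s \<omega>) \<omega>"
  proof
    fix t assume t: "t \<in> {0..T}"
    have a: "integrable R (\<lambda>s. indicator {0..t} s * v s \<omega>)"
      using integrable_mult_indicator[OF sets_R_I iv, of "{0..t}"] t by simp
    have b: "integrable R (\<lambda>s. indicator {0..t} s * v' s \<omega>)"
      using integrable_mult_indicator[OF sets_R_I iv', of "{0..t}"] t by simp
    have "Zint t (\<lambda>s \<omega>. v' s \<omega> - v s \<omega>) \<omega> = (\<integral>s. indicator {0..t} s * v' s \<omega> - indicator {0..t} s * v s \<omega> \<partial>R)"
      unfolding Zint_def by (simp add: algebra_simps)
    also have "\<dots> = (\<integral>s. indicator {0..t} s * v' s \<omega> \<partial>R) - (\<integral>s. indicator {0..t} s * v s \<omega> \<partial>R)"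
      by (rule Bochner_Integration.integral_diff[OF b a])
    finally show "state x0 v' t \<omega> - state x0 v t \<omega> = Zint t (\<lambda>s \<omega>. v' s \<omega> - v s \<omega>) \<omega>"
      using t by (simp add: state_R)
  qed
qed

lemma Zint_N_meas:
  assumes d: "d \<in> HH"
  shows "(\<lambda>p. Zint (fst p) d (snd p)) \<in> borel_measurable N"
proof -
  have "(\<lambda>p. state 0 d (fst p) (snd p)) \<in> borel_measurable N"
    using state_meas[of d 0] H_meas[OF d] by (simp add: split_beta')
  then show ?thesis
  proof (rule measurable_cong[THEN iffD1, rotated])
    fix p assume "p \<in> space N"
    then have "fst p \<in> {0..T}" by (auto simp: space_pair_measure space_R)
    then show "state 0 d (fst p) (snd p) = Zint (fst p) d (snd p)" by (simp add: state_R Zint_def)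
  qed
qed

lemma sq_diff_int:
  fixes f g :: "'b \<Rightarrow> real"
  assumes "f \<in> borel_measurable Q" "g \<in> borel_measurable Q"
    "integrable Q (\<lambda>x. (f x)\<^sup>2)" "integrable Q (\<lambda>x. (g x)\<^sup>2)"
  shows "integrable Q (\<lambda>x. (f x - g x)\<^sup>2)"
proof (rule Bochner_Integration.integrable_bound)
  show "integrable Q (\<lambda>x. 2 * (f x)\<^sup>2 + 2 * (g x)\<^sup>2)" using assms by simp
  show "(\<lambda>x. (f x - g x)\<^sup>2) \<in> borel_measurable Q" using assms by simp
  show "AE x in Q. norm ((f x - g x)\<^sup>2) \<le> norm (2 * (f x)\<^sup>2 + 2 * (g x)\<^sup>2)"
    using sq_sum_bound[of "f _" "- g _"] by (intro AE_I2) simp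
qed

lemma lin_fun_sq_int:
  fixes h :: "real \<Rightarrow> real \<Rightarrow> real"
  assumes v: "v \<in> HH" and hc: "continuous_on UNIV (\<lambda>p. h (fst p) (snd p))"
    and hb: "\<And>x v. \<bar>h x v\<bar> \<le> CL * (1 + \<bar>v\<bar>)"
  shows "(\<lambda>p. h (state x0 v (fst p) (snd p)) (v (fst p) (snd p))) \<in> borel_measurable N"
    "integrable N (\<lambda>p. (h (state x0 v (fst p) (snd p)) (v (fst p) (snd p)))\<^sup>2)"
proof -
  show m: "(\<lambda>p. h (state x0 v (fst p) (snd p)) (v (fst p) (snd p))) \<in> borel_measurable N"
    by (rule borel_measurable_continuous_Pair[OF Xm[OF v] H_meas[OF v] hc])
  show "integrable N (\<lambda>p. (h (state x0 v (fst p) (snd p)) (v (fst p) (snd p)))\<^sup>2)"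
  proof (rule Bochner_Integration.integrable_bound)
    show "integrable N (\<lambda>p. 2 * CL\<^sup>2 + 2 * CL\<^sup>2 * (v (fst p) (snd p))\<^sup>2)" using H_sq[OF v] by simp
    show "(\<lambda>p. (h (state x0 v (fst p) (snd p)) (v (fst p) (snd p)))\<^sup>2) \<in> borel_measurable N" using m by simp
    show "AE p in N. norm ((h (state x0 v (fst p) (snd p)) (v (fst p) (snd p)))\<^sup>2) \<le>
        norm (2 * CL\<^sup>2 + 2 * CL\<^sup>2 * (v (fst p) (snd p))\<^sup>2)"
      using lin_sq_bound[OF hb CL_pos] by (intro AE_I2) simp
  qed
qed

lemma Psi'_sq_int:
  assumes v: "v \<in> HH"
  shows "integrable M (\<lambda>\<omega>. (Psi' (state x0 v T \<omega>))\<^sup>2)"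
proof (rule Bochner_Integration.integrable_bound)
  show "integrable M (\<lambda>\<omega>. 2 * CP'\<^sup>2 + 2 * CP'\<^sup>2 * (state x0 v T \<omega>)\<^sup>2)"
    using state_sq_int_M[OF v, of T] T_pos by simp
  show "(\<lambda>\<omega>. (Psi' (state x0 v T \<omega>))\<^sup>2) \<in> borel_measurable M" using XTm[OF v, of T] T_pos by simp
  show "AE \<omega> in M. norm ((Psi' (state x0 v T \<omega>))\<^sup>2) \<le> norm (2 * CP'\<^sup>2 + 2 * CP'\<^sup>2 * (state x0 v T \<omega>)\<^sup>2)"
    using lin_sq_bound[OF Psi'_bd CP'_pos] by (intro AE_I2) simp
qed

end

context prob begin

lemma main_ineq:
  assumes v: "v \<in> HH" and v': "v' \<in> HH"
  defines "d \<equiv> \<lambda>s \<omega>. v' s \<omega> - v s \<omega>"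
  shows "cost_I M T x0 varpi L Psi v
        + (\<integral>p. Lv (state x0 v (fst p) (snd p)) (v (fst p) (snd p)) * d (fst p) (snd p) \<partial>N)
        + (\<integral>p. varpi (fst p) (snd p) * d (fst p) (snd p) \<partial>N)
        + (\<integral>p. Lx (state x0 v (fst p) (snd p)) (v (fst p) (snd p)) * Zint (fst p) d (snd p) \<partial>N)
        + (\<integral>\<omega>. Psi' (state x0 v T \<omega>) * Zint T d \<omega> \<partial>M)
        \<le> cost_I M T x0 varpi L Psi v'"
proof -
  define X where "X p = state x0 v (fst p) (snd p)" for p
  define X' where "X' p = state x0 v' (fst p) (snd p)" for p
  define V where "V p = v (fst p) (snd p)" for p
  define V' where "V' p = v' (fst p) (snd p)" for p
  define D where "D p = d (fst p) (snd p)" for p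
  define Z where "Z p = Zint (fst p) d (snd p)" for p
  have dH: "d \<in> HH" unfolding d_def by (rule H_diff[OF v' v])
  have DV: "\<And>p. D p = V' p - V p" unfolding D_def d_def V_def V'_def by simp
  have XmN: "X \<in> borel_measurable N" "X' \<in> borel_measurable N"
    unfolding X_def X'_def using Xm[OF v] Xm[OF v'] by simp_all
  have X2: "integrable N (\<lambda>p. (X p)\<^sup>2)" "integrable N (\<lambda>p. (X' p)\<^sup>2)"
    unfolding X_def X'_def using state_sq_int_N[OF v] state_sq_int_N[OF v'] by simp_all
  have dX2: "integrable N (\<lambda>p. (X' p - X p)\<^sup>2)" by (rule sq_diff_int[OF XmN(2,1) X2(2,1)])
  have Lxm: "(\<lambda>p. Lx (X p) (V p)) \<in> borel_measurable N" "integrable N (\<lambda>p. (Lx (X p) (V p))\<^sup>2)"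
    unfolding X_def V_def using lin_fun_sq_int[OF v Lx_cont Lx_bd] by simp_all
  have Lvm: "(\<lambda>p. Lv (X p) (V p)) \<in> borel_measurable N" "integrable N (\<lambda>p. (Lv (X p) (V p))\<^sup>2)"
    unfolding X_def V_def using lin_fun_sq_int[OF v Lv_cont Lv_bd] by simp_all
  have iL: "integrable N (\<lambda>p. L (X p) (V p))" unfolding X_def V_def by (rule Li[OF v])
  have iL': "integrable N (\<lambda>p. L (X' p) (V' p))" unfolding X'_def V'_def by (rule Li[OF v'])
  have iwv: "integrable N (\<lambda>p. varpi (fst p) (snd p) * V p)" unfolding V_def by (rule H_prod_int[OF varpi v])
  have iwv': "integrable N (\<lambda>p. varpi (fst p) (snd p) * V' p)" unfolding V'_def by (rule H_prod_int[OF varpi v'])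
  have iwd: "integrable N (\<lambda>p. varpi (fst p) (snd p) * D p)" unfolding D_def by (rule H_prod_int[OF varpi dH])
  have iLx: "integrable N (\<lambda>p. Lx (X p) (V p) * (X' p - X p))"
    by (rule sq_integrable_mult[OF Lxm(1) _ Lxm(2) dX2]) (use XmN in simp)
  have iLv: "integrable N (\<lambda>p. Lv (X p) (V p) * D p)"
    by (rule sq_integrable_mult[OF Lvm(1) _ Lvm(2)]) (use H_meas[OF dH] H_sq[OF dH] in \<open>simp_all add: D_def\<close>)
  have partN: "(\<integral>p. L (X p) (V p) + varpi (fst p) (snd p) * V p \<partial>N)
      + (\<integral>p. Lx (X p) (V p) * (X' p - X p) \<partial>N) + (\<integral>p. Lv (X p) (V p) * D p \<partial>N)
      + (\<integral>p. varpi (fst p) (snd p) * D p \<partial>N)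
      \<le> (\<integral>p. L (X' p) (V' p) + varpi (fst p) (snd p) * V' p \<partial>N)"
  proof -
    have "(\<integral>p. L (X p) (V p) + varpi (fst p) (snd p) * V p \<partial>N)
      + (\<integral>p. Lx (X p) (V p) * (X' p - X p) \<partial>N) + (\<integral>p. Lv (X p) (V p) * D p \<partial>N)
      + (\<integral>p. varpi (fst p) (snd p) * D p \<partial>N) =
      (\<integral>p. L (X p) (V p) + varpi (fst p) (snd p) * V p + Lx (X p) (V p) * (X' p - X p)
           + Lv (X p) (V p) * D p + varpi (fst p) (snd p) * D p \<partial>N)"
      using iL iwv iLx iLv iwd by simp
    also have "\<dots> \<le> (\<integral>p. L (X' p) (V' p) + varpi (fst p) (snd p) * V' p \<partial>N)"
    proof (rule integral_mono)
      show "integrable N (\<lambda>p. L (X p) (V p) + varpi (fst p) (snd p) * V p + Lx (X p) (V p) * (X' p - X p)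
           + Lv (X p) (V p) * D p + varpi (fst p) (snd p) * D p)"
        using iL iwv iLx iLv iwd by simp
      show "integrable N (\<lambda>p. L (X' p) (V' p) + varpi (fst p) (snd p) * V' p)" using iL' iwv' by simp
      fix p
      have "L (X p) (V p) + Lx (X p) (V p) * (X' p - X p) + Lv (X p) (V p) * (V' p - V p) \<le> L (X' p) (V' p)"
        by (rule grad_ineq2[OF L_deriv L_convex])
      then show "L (X p) (V p) + varpi (fst p) (snd p) * V p + Lx (X p) (V p) * (X' p - X p)
           + Lv (X p) (V p) * D p + varpi (fst p) (snd p) * D p \<le> L (X' p) (V' p) + varpi (fst p) (snd p) * V' p"
        unfolding DV by (simp add: algebra_simps)
    qed
    finally show ?thesis .
  qed
  have xz: "(\<integral>p. Lx (X p) (V p) * (X' p - X p) \<partial>N) = (\<integral>p. Lx (X p) (V p) * Z p \<partial>N)"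
  proof (rule integral_cong_AE)
    show "(\<lambda>p. Lx (X p) (V p) * (X' p - X p)) \<in> borel_measurable N" using Lxm(1) XmN by simp
    show "(\<lambda>p. Lx (X p) (V p) * Z p) \<in> borel_measurable N"
      unfolding Z_def using Lxm(1) Zint_N_meas[OF dH] by simp
    have "AE p in N. fst p \<in> {0..T}" by (rule AE_I2) (auto simp: space_pair_measure space_R)
    then show "AE p in N. Lx (X p) (V p) * (X' p - X p) = Lx (X p) (V p) * Z p"
      using AE_snd[OF state_diff[OF v v']]
      by eventually_elim (auto simp: X_def X'_def Z_def d_def)
  qed
  define XT where "XT \<omega> = state x0 v T \<omega>" for \<omega>
  define XT' where "XT' \<omega> = state x0 v' T \<omega>" for \<omega>
  have T0: "T \<in> {0..T}" using T_pos by simp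
  have XTm': "XT \<in> borel_measurable M" "XT' \<in> borel_measurable M"
    unfolding XT_def XT'_def using XTm[OF v T0] XTm[OF v' T0] by simp_all
  have XT2: "integrable M (\<lambda>\<omega>. (XT \<omega>)\<^sup>2)" "integrable M (\<lambda>\<omega>. (XT' \<omega>)\<^sup>2)"
    unfolding XT_def XT'_def using state_sq_int_M[OF v T0] state_sq_int_M[OF v' T0] by simp_all
  have iP: "integrable M (\<lambda>\<omega>. Psi (XT \<omega>))" "integrable M (\<lambda>\<omega>. Psi (XT' \<omega>))"
    unfolding XT_def XT'_def using Psii[OF v] Psii[OF v'] by simp_all
  have iP'd: "integrable M (\<lambda>\<omega>. Psi' (XT \<omega>) * (XT' \<omega> - XT \<omega>))"
  proof (rule sq_integrable_mult)
    show "(\<lambda>\<omega>. Psi' (XT \<omega>)) \<in> borel_measurable M" using XTm'(1) by simp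
    show "(\<lambda>\<omega>. XT' \<omega> - XT \<omega>) \<in> borel_measurable M" using XTm' by simp
    show "integrable M (\<lambda>\<omega>. (Psi' (XT \<omega>))\<^sup>2)" unfolding XT_def by (rule Psi'_sq_int[OF v])
    show "integrable M (\<lambda>\<omega>. (XT' \<omega> - XT \<omega>)\<^sup>2)" by (rule sq_diff_int[OF XTm'(2,1) XT2(2,1)])
  qed
  have partM: "(\<integral>\<omega>. Psi (XT \<omega>) \<partial>M) + (\<integral>\<omega>. Psi' (XT \<omega>) * (XT' \<omega> - XT \<omega>) \<partial>M) \<le> (\<integral>\<omega>. Psi (XT' \<omega>) \<partial>M)"
  proof -
    have "(\<integral>\<omega>. Psi (XT \<omega>) \<partial>M) + (\<integral>\<omega>. Psi' (XT \<omega>) * (XT' \<omega> - XT \<omega>) \<partial>M) =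
          (\<integral>\<omega>. Psi (XT \<omega>) + Psi' (XT \<omega>) * (XT' \<omega> - XT \<omega>) \<partial>M)"
      using iP(1) iP'd by simp
    also have "\<dots> \<le> (\<integral>\<omega>. Psi (XT' \<omega>) \<partial>M)"
      by (rule integral_mono) (use iP iP'd grad_ineq1[OF Psi_deriv Psi_convex] in auto)
    finally show ?thesis .
  qed
  have pz: "(\<integral>\<omega>. Psi' (XT \<omega>) * (XT' \<omega> - XT \<omega>) \<partial>M) = (\<integral>\<omega>. Psi' (state x0 v T \<omega>) * Zint T d \<omega> \<partial>M)"
  proof (rule integral_cong_AE)
    show "(\<lambda>\<omega>. Psi' (XT \<omega>) * (XT' \<omega> - XT \<omega>)) \<in> borel_measurable M" using XTm' by simp
    show "(\<lambda>\<omega>. Psi' (state x0 v T \<omega>) * Zint T d \<omega>) \<in> borel_measurable M"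
      using XTm'(1) Zint_meas[of d T] H_meas[OF dH] unfolding XT_def by (simp add: split_beta')
    show "AE \<omega> in M. Psi' (XT \<omega>) * (XT' \<omega> - XT \<omega>) = Psi' (state x0 v T \<omega>) * Zint T d \<omega>"
      using state_diff[OF v v'] by eventually_elim (use T0 in \<open>auto simp: XT_def XT'_def d_def\<close>)
  qed
  show ?thesis
    unfolding cost_eq[OF v] cost_eq[OF v']
    using partN partM xz pz
    unfolding X_def X'_def V_def V'_def D_def Z_def XT_def XT'_def by linarith
qed

end

context prob begin

lemma a_H:
  assumes v: "v \<in> HH"
  shows "(\<lambda>s \<omega>. Lv (state x0 v s \<omega>) (v s \<omega>)) \<in> HH"
proof (rule HI)
  show "(\<lambda>p. Lv (state x0 v (fst p) (snd p)) (v (fst p) (snd p))) \<in> borel_measurable N"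
    using lin_fun_sq_int(1)[OF v Lv_cont Lv_bd] .
  show "integrable N (\<lambda>p. (Lv (state x0 v (fst p) (snd p)) (v (fst p) (snd p)))\<^sup>2)"
    using lin_fun_sq_int(2)[OF v Lv_cont Lv_bd] .
  fix s assume s: "s \<in> {0..T}"
  show "(\<lambda>\<omega>. Lv (state x0 v s \<omega>) (v s \<omega>)) \<in> borel_measurable (G s)"
    by (rule borel_measurable_continuous_Pair[OF state_adapted[OF v s] H_ad[OF v s] Lv_cont])
qed

lemma Zint_sq_int_N:
  assumes d: "d \<in> HH"
  shows "integrable N (\<lambda>p. (Zint (fst p) d (snd p))\<^sup>2)"
proof -
  have a: "integrable N (\<lambda>p. (state 0 d (fst p) (snd p))\<^sup>2)" by (rule state_sq_int_N[OF d])
  have "integrable N (\<lambda>p. (state 0 d (fst p) (snd p))\<^sup>2) \<longleftrightarrow> integrable N (\<lambda>p. (Zint (fst p) d (snd p))\<^sup>2)"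
  proof (rule Bochner_Integration.integrable_cong[OF refl])
    fix p assume "p \<in> space N"
    then have "fst p \<in> {0..T}" by (auto simp: space_pair_measure space_R)
    then show "(state 0 d (fst p) (snd p))\<^sup>2 = (Zint (fst p) d (snd p))\<^sup>2" by (simp add: state_R Zint_def)
  qed
  then show ?thesis using a by simp
qed

lemma Zint_E_bound:
  assumes d: "d \<in> HH"
  shows "(\<integral>\<omega>. (Zint t d \<omega>)\<^sup>2 \<partial>M) \<le> T * nrm d"
proof -
  have "(\<integral>\<omega>. (Zint t d \<omega>)\<^sup>2 \<partial>M) \<le> (\<integral>\<omega>. T * Q2 d \<omega> \<partial>M)"
  proof (rule integral_mono_AE)
    show "integrable M (\<lambda>\<omega>. (Zint t d \<omega>)\<^sup>2)" by (rule Zint_sq_int[OF d])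
    show "integrable M (\<lambda>\<omega>. T * Q2 d \<omega>)" using H_Q2_int(1)[OF d] by simp
    show "AE \<omega> in M. (Zint t d \<omega>)\<^sup>2 \<le> T * Q2 d \<omega>"
      using H_AE_sec[OF d]
    proof (rule AE_mp[OF _ AE_I2[OF impI]])
      fix \<omega> assume "\<omega> \<in> space M" "integrable R (\<lambda>s. (d s \<omega>)\<^sup>2)"
      then show "(Zint t d \<omega>)\<^sup>2 \<le> T * Q2 d \<omega>"
        using ind_sec_bound[of d \<omega> 0 t] d unfolding H_iff Zint_def by simp
    qed
  qed
  also have "\<dots> = T * nrm d" using H_Q2_int(2)[OF d] unfolding nrm_def by simp
  finally show ?thesis .
qed

lemma ell_lim:
  fixes ell :: "real \<times> 'a \<Rightarrow> real" and d :: "nat \<Rightarrow> real \<Rightarrow> 'a \<Rightarrow> real"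
  assumes em: "ell \<in> borel_measurable N" and e2: "integrable N (\<lambda>p. (ell p)\<^sup>2)"
    and dH: "\<And>n. d n \<in> HH" and dw: "\<And>w. w \<in> HH \<Longrightarrow> (\<lambda>n. H_inner M T (d n) w) \<longlonglongrightarrow> 0"
    and dB: "\<And>n. nrm (d n) \<le> B"
  shows "(\<lambda>n. \<integral>p. ell p * Zint (fst p) (d n) (snd p) \<partial>N) \<longlonglongrightarrow> 0"
proof -
  define f where "f n t = (\<integral>\<omega>. ell (t, \<omega>) * Zint t (d n) \<omega> \<partial>M)" for n t
  have Zm: "\<And>n. (\<lambda>p. Zint (fst p) (d n) (snd p)) \<in> borel_measurable N" by (rule Zint_N_meas[OF dH])
  have iprod: "\<And>n. integrable N (\<lambda>p. ell p * Zint (fst p) (d n) (snd p))"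
    by (rule sq_integrable_mult[OF em Zm e2 Zint_sq_int_N[OF dH]])
  have eq: "\<And>n. (\<integral>p. ell p * Zint (fst p) (d n) (snd p) \<partial>N) = (\<integral>t. f n t \<partial>R)"
    unfolding f_def using PRM.integral_fst'[OF iprod] by simp
  have B0: "0 \<le> B" using dB[of 0] nrm_nonneg[of "d 0"] by linarith
  define w where "w t = ((\<integral>\<omega>. (ell (t, \<omega>))\<^sup>2 \<partial>M) + T * B) / 2" for t
  have "(\<lambda>n. \<integral>t. f n t \<partial>R) \<longlonglongrightarrow> (\<integral>t. 0 \<partial>R)"
  proof (rule integral_dominated_convergence[where w=w])
    show "(\<lambda>t. 0::real) \<in> borel_measurable R" by simp
    fix n
    show "f n \<in> borel_measurable R"
      unfolding f_def using borel_measurable_lebesgue_integral[of "\<lambda>t \<omega>. ell (t, \<omega>) * Zint t (d n) \<omega>" R]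
        em Zm[of n] by simp
    show "integrable R w"
      unfolding w_def using PRM.integrable_fst'[OF e2] by simp
    have AEl: "AE t in R. integrable M (\<lambda>\<omega>. (ell (t, \<omega>))\<^sup>2)"
      using PRM.AE_integrable_fst'[OF e2] by simp
    show "AE t in R. norm (f n t) \<le> w t"
      using AEl
    proof (rule AE_mp[OF _ AE_I2[OF impI]])
      fix t assume t: "t \<in> space R" and it: "integrable M (\<lambda>\<omega>. (ell (t, \<omega>))\<^sup>2)"
      have etm: "(\<lambda>\<omega>. ell (t, \<omega>)) \<in> borel_measurable M"
        using measurable_comp[OF measurable_Pair1'[OF t] em] by (simp add: o_def)
      have Z2: "integrable M (\<lambda>\<omega>. (Zint t (d n) \<omega>)\<^sup>2)" by (rule Zint_sq_int[OF dH])
      have Zmt: "Zint t (d n) \<in> borel_measurable M" using Zint_meas H_meas[OF dH] by (simp add: split_beta')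
      have "\<bar>f n t\<bar> \<le> (1 * (\<integral>\<omega>. (ell (t, \<omega>))\<^sup>2 \<partial>M) + (\<integral>\<omega>. (Zint t (d n) \<omega>)\<^sup>2 \<partial>M) / 1) / 2"
        unfolding f_def by (rule amgm_int[OF it Z2 sq_integrable_mult[OF etm Zmt it Z2]]) simp
      also have "\<dots> \<le> w t"
        unfolding w_def using Zint_E_bound[OF dH, of t n] dB[of n] T_pos
        by (simp add: divide_right_mono) (smt (verit) mult_left_mono)
      finally show "norm (f n t) \<le> w t" by simp
    qed
  next
    have AEl: "AE t in R. integrable M (\<lambda>\<omega>. (ell (t, \<omega>))\<^sup>2)"
      using PRM.AE_integrable_fst'[OF e2] by simp
    show "AE t in R. (\<lambda>n. f n t) \<longlonglongrightarrow> 0"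
      using AEl
    proof (rule AE_mp[OF _ AE_I2[OF impI]])
      fix t assume t: "t \<in> space R" and it: "integrable M (\<lambda>\<omega>. (ell (t, \<omega>))\<^sup>2)"
      have etm: "(\<lambda>\<omega>. ell (t, \<omega>)) \<in> borel_measurable M"
        using measurable_comp[OF measurable_Pair1'[OF t] em] by (simp add: o_def)
      have tT: "t \<in> {0..T}" using t space_R by simp
      show "(\<lambda>n. f n t) \<longlonglongrightarrow> 0"
        unfolding f_def using K_lim_E[OF dH dw _ etm it tT, of B] dB unfolding nrm_def by simp
    qed
  qed
  then show ?thesis unfolding eq by simp
qed

end

context prob begin

lemma prob_wlsc: "weakly_lsc_on HH (H_inner M T) (cost_I M T x0 varpi L Psi)"
  unfolding weakly_lsc_on_def
proof (intro allI impI, elim conjE)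
  fix vs v assume vsH: "\<forall>n. vs n \<in> HH" and v: "v \<in> HH"
    and wk: "\<forall>w\<in>HH. (\<lambda>n. H_inner M T (vs n) w) \<longlonglongrightarrow> H_inner M T v w"
  define J where "J = cost_I M T x0 varpi L Psi"
  define d where "d n = (\<lambda>s \<omega>. vs n s \<omega> - v s \<omega>)" for n
  have dH: "\<And>n. d n \<in> HH" unfolding d_def using H_diff vsH v by blast
  have dw: "(\<lambda>n. H_inner M T (d n) w) \<longlonglongrightarrow> 0" if w: "w \<in> HH" for w
  proof -
    have "(\<lambda>n. H_inner M T (vs n) w - H_inner M T v w) \<longlonglongrightarrow> H_inner M T v w - H_inner M T v w"
      using wk w by (intro tendsto_diff) auto
    moreover have "\<And>n. H_inner M T (d n) w = H_inner M T (vs n) w - H_inner M T v w"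
      unfolding d_def using ip_diff vsH v w by blast
    ultimately show ?thesis by simp
  qed
  obtain B where dB: "\<And>n. nrm (d n) \<le> B" using weak_bdd[OF dH dw] by blast
  define a where "a = (\<lambda>s \<omega>. Lv (state x0 v s \<omega>) (v s \<omega>))"
  have aH: "a \<in> HH" unfolding a_def by (rule a_H[OF v])
  define r where "r n =
          (\<integral>p. Lv (state x0 v (fst p) (snd p)) (v (fst p) (snd p)) * d n (fst p) (snd p) \<partial>N)
        + (\<integral>p. varpi (fst p) (snd p) * d n (fst p) (snd p) \<partial>N)
        + (\<integral>p. Lx (state x0 v (fst p) (snd p)) (v (fst p) (snd p)) * Zint (fst p) (d n) (snd p) \<partial>N)
        + (\<integral>\<omega>. Psi' (state x0 v T \<omega>) * Zint T (d n) \<omega> \<partial>M)" for n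
  have ineq: "J v + r n \<le> J (vs n)" for n
    unfolding J_def r_def d_def using main_ineq[OF v, of "vs n"] vsH by simp
  have r0: "r \<longlonglongrightarrow> 0"
  proof -
    have t1: "(\<lambda>n. \<integral>p. Lv (state x0 v (fst p) (snd p)) (v (fst p) (snd p)) * d n (fst p) (snd p) \<partial>N) \<longlonglongrightarrow> 0"
      using dw[OF aH] unfolding ip_eq a_def by (simp add: mult.commute)
    have t2: "(\<lambda>n. \<integral>p. varpi (fst p) (snd p) * d n (fst p) (snd p) \<partial>N) \<longlonglongrightarrow> 0"
      using dw[OF varpi] unfolding ip_eq by (simp add: mult.commute)
    have t3: "(\<lambda>n. \<integral>p. Lx (state x0 v (fst p) (snd p)) (v (fst p) (snd p)) * Zint (fst p) (d n) (snd p) \<partial>N) \<longlonglongrightarrow> 0"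
      by (rule ell_lim[OF lin_fun_sq_int[OF v Lx_cont Lx_bd] dH dw dB])
    have T0: "T \<in> {0..T}" using T_pos by simp
    have t4: "(\<lambda>n. \<integral>\<omega>. Psi' (state x0 v T \<omega>) * Zint T (d n) \<omega> \<partial>M) \<longlonglongrightarrow> 0"
    proof (rule K_lim_E[OF dH dw _ _ Psi'_sq_int[OF v] T0])
      show "\<And>n. (\<integral>p. (d n (fst p) (snd p))\<^sup>2 \<partial>N) \<le> B" using dB unfolding nrm_def .
      show "(\<lambda>\<omega>. Psi' (state x0 v T \<omega>)) \<in> borel_measurable M" using XTm[OF v T0] by simp
    qed
    have "(\<lambda>n. r n) \<longlonglongrightarrow> 0 + 0 + 0 + 0"
      unfolding r_def by (intro tendsto_add t1 t2 t3 t4)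
    then show ?thesis by simp
  qed
  have "(\<lambda>n. ereal (J v + r n)) \<longlonglongrightarrow> ereal (J v + 0)"
    by (intro tendsto_ereal tendsto_add tendsto_const r0)
  then have "liminf (\<lambda>n. ereal (J v + r n)) = ereal (J v)"
    by (intro lim_imp_Liminf) simp_all
  moreover have "liminf (\<lambda>n. ereal (J v + r n)) \<le> liminf (\<lambda>n. ereal (J (vs n)))"
    by (intro Liminf_mono) (simp add: ineq)
  ultimately show "ereal (cost_I M T x0 varpi L Psi v) \<le> liminf (\<lambda>n. ereal (cost_I M T x0 varpi L Psi (vs n)))"
    unfolding J_def by simp
qed

end

theorem proposition3p1:
  fixes M :: "'a measure" and W :: "real \<Rightarrow> 'a \<Rightarrow> real"
    and T x0 :: real and varpi :: "real \<Rightarrow> 'a \<Rightarrow> real"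
    and L Lx Lv :: "real \<Rightarrow> real \<Rightarrow> real" and \<Psi> \<Psi>' :: "real \<Rightarrow> real"
  assumes T_pos: "T > 0"
    and BM: "brownian_motion M W"
    and complete: "complete_space_measure M"
    and varpi: "varpi \<in> H_F M (brownian_filtration M W) T"
    \<comment> \<open>(A1)\<close>
    and L_deriv: "\<And>x v. ((\<lambda>p. L (fst p) (snd p)) has_derivative
                     (\<lambda>h. Lx x v * fst h + Lv x v * snd h)) (at (x, v))"
    and Lx_cont: "continuous_on UNIV (\<lambda>p. Lx (fst p) (snd p))"
    and Lv_cont: "continuous_on UNIV (\<lambda>p. Lv (fst p) (snd p))"
    and L_nonneg: "\<And>x v. L x v \<ge> 0"
    and L_convex: "convex_on UNIV (\<lambda>p. L (fst p) (snd p))"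
    \<comment> \<open>(A2)\<close>
    and Psi_deriv: "\<And>x. (\<Psi> has_real_derivative \<Psi>' x) (at x)"
    and Psi'_cont: "continuous_on UNIV \<Psi>'"
    and Psi_nonneg: "\<And>x. \<Psi> x \<ge> 0"
    and Psi_convex: "convex_on UNIV \<Psi>"
    \<comment> \<open>(A3)\<close>
    and A3: "\<exists>C C'. C > 0 \<and> C' > 0 \<and>
               (\<forall>x. \<Psi> x \<le> C * (1 + \<bar>x\<bar>\<^sup>2) \<and> \<bar>\<Psi>' x\<bar> \<le> C' * (1 + \<bar>x\<bar>))"
    \<comment> \<open>(A4)\<close>
    and A4: "\<exists>\<beta> C. \<beta> > 0 \<and> C > 0 \<and>
               (\<forall>x v. L x v \<le> \<beta> * (1 + \<bar>v\<bar>\<^sup>2) \<and>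
                      \<bar>Lx x v\<bar> \<le> C * (1 + \<bar>v\<bar>) \<and> \<bar>Lv x v\<bar> \<le> C * (1 + \<bar>v\<bar>))"
  shows "weakly_lsc_on (H_F M (brownian_filtration M W) T) (H_inner M T)
           (cost_I M T x0 varpi L \<Psi>)"

proof -
  have ps: "prob_space M" using BM unfolding brownian_motion_def by blast
  have Wm: "\<And>s. 0 \<le> s \<Longrightarrow> W s \<in> borel_measurable M" using BM unfolding brownian_motion_def by blast
  define gen where "gen t = (\<Union>s\<in>{0..t}. {W s -` B \<inter> space M | B. B \<in> sets borel}) \<union> null_sets M" for t
  have BF: "\<And>t. brownian_filtration M W t = sigma_sets (space M) (gen t)"
    unfolding brownian_filtration_def gen_def ..
  have gen_sub: "gen t \<subseteq> sets M" for t
  proof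
    fix A assume "A \<in> gen t"
    then consider (a) s B where "s \<in> {0..t}" "B \<in> sets borel" "A = W s -` B \<inter> space M"
      | (b) "A \<in> null_sets M" unfolding gen_def by blast
    then show "A \<in> sets M"
    proof cases
      case a
      then show ?thesis using measurable_sets[OF Wm[of s] a(2)] by simp
    qed auto
  qed
  have gen_pow: "gen t \<subseteq> Pow (space M)" for t
    using gen_sub sets.sets_into_space by blast
  have gen_mono: "s \<le> t \<Longrightarrow> gen s \<subseteq> gen t" for s t
  proof -
    assume st: "s \<le> t"
    then have "{0..s} \<subseteq> {0..t}" by auto
    then show ?thesis unfolding gen_def by blast
  qed
  obtain C C' where A3': "C > 0" "C' > 0" "\<And>x. \<Psi> x \<le> C * (1 + \<bar>x\<bar>\<^sup>2)" "\<And>x. \<bar>\<Psi>' x\<bar> \<le> C' * (1 + \<bar>x\<bar>)"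
    using A3 by blast
  obtain \<beta> CL where A4': "\<beta> > 0" "CL > 0" "\<And>x v. L x v \<le> \<beta> * (1 + \<bar>v\<bar>\<^sup>2)"
    "\<And>x v. \<bar>Lx x v\<bar> \<le> CL * (1 + \<bar>v\<bar>)" "\<And>x v. \<bar>Lv x v\<bar> \<le> CL * (1 + \<bar>v\<bar>)"
    using A4 by blast
  have ct: "ctrl M (brownian_filtration M W) T"
    unfolding ctrl_def ctrl_axioms_def
  proof (intro conjI allI impI ps T_pos)
    show "\<And>t. brownian_filtration M W t \<subseteq> sets M"
      unfolding BF by (rule sets.sigma_sets_subset[OF gen_sub])
    show "\<And>s t. s \<le> t \<Longrightarrow> brownian_filtration M W s \<subseteq> brownian_filtration M W t"
      unfolding BF by (rule sigma_sets_mono'[OF gen_mono])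
    show "\<And>t. null_sets M \<subseteq> brownian_filtration M W t"
      unfolding BF gen_def by (auto intro: sigma_sets.Basic)
    show "\<And>t. sigma_algebra (space M) (brownian_filtration M W t)"
      unfolding BF by (rule sigma_algebra_sigma_sets[OF gen_pow])
    show "\<And>A B. A \<in> null_sets M \<Longrightarrow> B \<subseteq> A \<Longrightarrow> B \<in> sets M"
      using complete unfolding complete_space_measure_def by blast
  qed
  have pr: "prob M (brownian_filtration M W) T varpi L Lx Lv \<Psi> \<Psi>' C C' \<beta> CL"
    unfolding prob_def prob_axioms_def
    using ct varpi L_deriv Lx_cont Lv_cont L_nonneg L_convex Psi_deriv Psi'_cont Psi_nonneg Psi_convex A3' A4'
    by blast
  show ?thesis using prob.prob_wlsc[OF pr] .
qed

end
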